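(* Let $A$ be a valuation ring with maximal ideal $\mathfrak m$ and residue field $k$, and assume $2\in A^\times$. Let $[u_1,\dots,u_r]$ and $[v_1,\dots,v_s]$ be possibly empty frames in $\mathbb E^n_A$ spanning quadratic submodules $U$ and $V$ respectively. Then $U^\perp\cap V^\perp$ contains a unit vector if either (i) $n\geq m_A+r+2s$; or (ii) $n\geq m_A+r+s$ and $k$ is formally real; or (iii) $n>2P(k)r+s$ and $A$ is henselian; or (iv) $n>P(k)r+s$, $A$ is henselian, and $k$ is formally real.
   Context: $\mathbb E^n_A=(A^n,q)$, $q(x)=x_1^2+\dots+x_n^2$, $B_q(x,y)=q(x+y)-q(x)-q(y)$. A unit vector is $v$ with $q(v)=1$; a frame is a finite set of unit vectors $w_i$ with $B_q(w_i,w_j)=0$ for $i\neq j$. $S^\perp=\{x:B_q(x,s)=0\ \forall s\in S\}$. A quadratic submodule is a direct summand with restricted form; a quadratic module $(V,q)$ (finitely generated projective $V$) is non-singular if $x\mapsto B_q(x,-)$ is an isomorphism $V\to\mathrm{Hom}(V,A)$. $m_A\in\mathbb Z_{\geq1}\cup\{\infty\}$ is the smallest $m$ such that every non-singular quadratic submodule $W$ of some $\mathbb E^N_A$ with $\dim_k W/\mathfrak mW\geq m$ contains a unit vector. $P(k)$ is the smallest $p\geq1$ such that every sum of squares in $k$ is a sum of $p$ squares ($\infty$ if none). A field is formally real if $-1$ is not a sum of squares. Henselian: for $f\in A[X]$, simple roots in $k$ of $\bar f$ lift to roots of $f$ in $A$. A valuation ring is a domain $A$ with fraction field $K$ such that $x\in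 A$ or $x^{-1}\in A$ for each $x\in K^\times$. *)

theory Defs
  imports Main "HOL-Library.Extended_Nat" "HOL-Computational_Algebra.Polynomial"
    "HOL-Computational_Algebra.Fraction_Field"
begin

definition valuation_ring :: "('a::idom) itself \<Rightarrow> bool" where
  "valuation_ring _ \<longleftrightarrow>
     (\<forall>x::'a fract. x \<noteq> 0 \<longrightarrow>
        x \<in> range (\<lambda>a. Fract a 1) \<or> inverse x \<in> range (\<lambda>a. Fract a 1))"

(* pi : A -> k is a residue map: surjective ring hom onto the field k whose kernel is
   the maximal ideal m of the (local) ring A, i.e. the set of non-units. *)
definition residue_map :: "('a::comm_ring_1 \<Rightarrow> 'k::field) \<Rightarrow> bool" where
  "residue_map \<pi> \<longleftrightarrow> \<pi> 1 = 1 \<and> (\<forall>x y. \<pi> (x + y) = \<pi> x + \<pi> y)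
     \<and> (\<forall>x y. \<pi> (x * y) = \<pi> x * \<pi> y) \<and> surj \<pi>
     \<and> (\<forall>x. \<pi> x = 0 \<longleftrightarrow> \<not> x dvd 1)"

definition henselian :: "('a::comm_ring_1 \<Rightarrow> 'k::field) \<Rightarrow> bool" where
  "henselian \<pi> \<longleftrightarrow> (\<forall>(f::'a poly) (a0::'k).
      poly (map_poly \<pi> f) a0 = 0 \<and> poly (pderiv (map_poly \<pi> f)) a0 \<noteq> 0
      \<longrightarrow> (\<exists>a. poly f a = 0 \<and> \<pi> a = a0))"

(* E^n_A: vectors are functions nat => A supported on {..<n} *)
definition vecs :: "nat \<Rightarrow> (nat \<Rightarrow> 'a::comm_ring_1) set" where
  "vecs n = {x. \<forall>i\<ge>n. x i = 0}"

definition qf :: "nat \<Rightarrow> (nat \<Rightarrow> 'a::comm_ring_1) \<Rightarrow> 'a" where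
  "qf n x = (\<Sum>i<n. (x i)^2)"

definition Bq :: "nat \<Rightarrow> (nat \<Rightarrow> 'a::comm_ring_1) \<Rightarrow> (nat \<Rightarrow> 'a) \<Rightarrow> 'a" where
  "Bq n x y = qf n (\<lambda>i. x i + y i) - qf n x - qf n y"

definition unit_vector :: "nat \<Rightarrow> (nat \<Rightarrow> 'a::comm_ring_1) \<Rightarrow> bool" where
  "unit_vector n v \<longleftrightarrow> v \<in> vecs n \<and> qf n v = 1"

definition frame :: "nat \<Rightarrow> (nat \<Rightarrow> nat \<Rightarrow> 'a::comm_ring_1) \<Rightarrow> nat \<Rightarrow> bool" where
  "frame n u r \<longleftrightarrow> (\<forall>i<r. unit_vector n (u i))
     \<and> (\<forall>i<r. \<forall>j<r. i \<noteq> j \<longrightarrow> Bq n (u i) (u j) = 0)"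

definition span_frame :: "(nat \<Rightarrow> nat \<Rightarrow> 'a::comm_ring_1) \<Rightarrow> nat \<Rightarrow> (nat \<Rightarrow> 'a) set" where
  "span_frame u r = {x. \<exists>c. x = (\<lambda>k. \<Sum>i<r. c i * u i k)}"

definition perp :: "nat \<Rightarrow> (nat \<Rightarrow> 'a::comm_ring_1) set \<Rightarrow> (nat \<Rightarrow> 'a) set" where
  "perp n S = {x \<in> vecs n. \<forall>s\<in>S. Bq n x s = 0}"

definition submod :: "nat \<Rightarrow> (nat \<Rightarrow> 'a::comm_ring_1) set \<Rightarrow> bool" where
  "submod N W \<longleftrightarrow> W \<subseteq> vecs N \<and> (\<lambda>_. 0) \<in> W
     \<and> (\<forall>x\<in>W. \<forall>y\<in>W. (\<lambda>i. x i + y i) \<in> W) \<and> (\<forall>a. \<forall>x\<in>W. (\<lambda>i. a * x i) \<in> W)"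

definition quad_submod :: "nat \<Rightarrow> (nat \<Rightarrow> 'a::comm_ring_1) set \<Rightarrow> bool" where
  "quad_submod N W \<longleftrightarrow> submod N W \<and>
     (\<exists>W'. submod N W' \<and> W \<inter> W' = {\<lambda>_. 0} \<and>
        (\<forall>x\<in>vecs N. \<exists>y\<in>W. \<exists>z\<in>W'. x = (\<lambda>i. y i + z i)))"

definition linear_functional :: "(nat \<Rightarrow> 'a::comm_ring_1) set \<Rightarrow> ((nat \<Rightarrow> 'a) \<Rightarrow> 'a) \<Rightarrow> bool" where
  "linear_functional W \<phi> \<longleftrightarrow> (\<forall>x\<in>W. \<forall>y\<in>W. \<phi> (\<lambda>i. x i + y i) = \<phi> x + \<phi> y)
     \<and> (\<forall>a. \<forall>x\<in>W. \<phi> (\<lambda>i. a * x i) = a * \<phi> x)"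

(* x |-> B_q(x,-) is an isomorphism W -> Hom_A(W,A) *)
definition nonsingular :: "nat \<Rightarrow> (nat \<Rightarrow> 'a::comm_ring_1) set \<Rightarrow> bool" where
  "nonsingular N W \<longleftrightarrow>
     (\<forall>x\<in>W. (\<forall>y\<in>W. Bq N x y = 0) \<longrightarrow> x = (\<lambda>_. 0))
     \<and> (\<forall>\<phi>. linear_functional W \<phi> \<longrightarrow> (\<exists>x\<in>W. \<forall>y\<in>W. \<phi> y = Bq N x y))"

definition mW :: "('a::comm_ring_1 \<Rightarrow> 'k::field) \<Rightarrow> (nat \<Rightarrow> 'a) set \<Rightarrow> (nat \<Rightarrow> 'a) set" where
  "mW \<pi> W = {x. \<exists>(l::nat) a y. (\<forall>j<l. \<pi> (a j) = 0 \<and> y j \<in> W) \<and> x = (\<lambda>i. \<Sum>j<l. a j * y j i)}"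

(* dim_k (W / mW) >= d : there are d elements of W whose classes in W/mW are k-linearly
   independent (a k-combination sum pi(c_j) [w_j] vanishes iff sum c_j w_j in mW). *)
definition dim_res_ge :: "('a::comm_ring_1 \<Rightarrow> 'k::field) \<Rightarrow> (nat \<Rightarrow> 'a) set \<Rightarrow> nat \<Rightarrow> bool" where
  "dim_res_ge \<pi> W d \<longleftrightarrow> (\<exists>w. (\<forall>j<d. w j \<in> W) \<and>
     (\<forall>c. (\<lambda>i. \<Sum>j<d. c j * w j i) \<in> mW \<pi> W \<longrightarrow> (\<forall>j<d. \<pi> (c j) = 0)))"

definition mA_good :: "('a::comm_ring_1 \<Rightarrow> 'k::field) \<Rightarrow> nat \<Rightarrow> bool" where
  "mA_good \<pi> m \<longleftrightarrow> (\<forall>N (W::(nat \<Rightarrow> 'a) set). quad_submod N W \<and> nonsingular N W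
      \<and> dim_res_ge \<pi> W m \<longrightarrow> (\<exists>x\<in>W. qf N x = 1))"

definition m_A :: "('a::comm_ring_1 \<Rightarrow> 'k::field) \<Rightarrow> enat" where
  "m_A \<pi> = (if \<exists>m\<ge>1. mA_good \<pi> m then enat (LEAST m. m \<ge> 1 \<and> mA_good \<pi> m) else \<infinity>)"

definition sum_of_p_squares :: "'k::comm_ring_1 \<Rightarrow> nat \<Rightarrow> bool" where
  "sum_of_p_squares x p \<longleftrightarrow> (\<exists>a. x = (\<Sum>i<p. (a i)^2))"

definition sum_of_squares :: "'k::comm_ring_1 \<Rightarrow> bool" where
  "sum_of_squares x \<longleftrightarrow> (\<exists>p. sum_of_p_squares x p)"

definition pyth_good :: "('k::comm_ring_1) itself \<Rightarrow> nat \<Rightarrow> bool" where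
  "pyth_good _ p \<longleftrightarrow> (\<forall>x::'k. sum_of_squares x \<longrightarrow> sum_of_p_squares x p)"

definition pythagoras_number :: "('k::comm_ring_1) itself \<Rightarrow> enat" where
  "pythagoras_number T = (if \<exists>p\<ge>1. pyth_good T p then enat (LEAST p. p \<ge> 1 \<and> pyth_good T p) else \<infinity>)"

definition formally_real :: "('k::field) itself \<Rightarrow> bool" where
  "formally_real _ \<longleftrightarrow> \<not> sum_of_squares (-1::'k)"

end

theory Submission
  imports Defs "HOL-Library.Function_Algebras"
begin


definition bf :: "nat \<Rightarrow> (nat \<Rightarrow> 'b::comm_ring_1) \<Rightarrow> (nat \<Rightarrow> 'b) \<Rightarrow> 'b" where
  "bf n x y = (\<Sum>i<n. x i * y i)"

lemma bf_sym: "bf n x y = bf n y x" by (simp add: bf_def mult.commute)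

lemma bf_lin: "bf n (\<lambda>i. a * x i + b * y i) z = a * bf n x z + b * bf n y z"
  by (simp add: bf_def sum.distrib sum_distrib_left algebra_simps)

lemma bf_lin_r: "bf n z (\<lambda>i. a * x i + b * y i) = a * bf n z x + b * bf n z y"
  using bf_lin[of n a x b y z] by (simp add: bf_sym)

lemma bf_add: "bf n (\<lambda>i. x i + y i) z = bf n x z + bf n y z"
  by (simp add: bf_def sum.distrib algebra_simps)
lemma bf_add_r: "bf n z (\<lambda>i. x i + y i) = bf n z x + bf n z y"
  by (simp add: bf_def sum.distrib algebra_simps)
lemma bf_diff: "bf n (\<lambda>i. x i - y i) z = bf n x z - bf n y z"
  by (simp add: bf_def sum_subtractf algebra_simps)
lemma bf_diff_r: "bf n z (\<lambda>i. x i - y i) = bf n z x - bf n z y"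
  by (simp add: bf_def sum_subtractf algebra_simps)
lemma bf_scale: "bf n (\<lambda>i. a * x i) z = a * bf n x z"
  by (simp add: bf_def sum_distrib_left algebra_simps)
lemma bf_scale_r: "bf n z (\<lambda>i. a * x i) = a * bf n z x"
  by (simp add: bf_def sum_distrib_left algebra_simps)
lemma bf_neg: "bf n (\<lambda>i. - x i) z = - bf n x z"
  by (simp add: bf_def sum_negf)
lemma bf_neg_r: "bf n z (\<lambda>i. - x i) = - bf n z x"
  by (simp add: bf_def sum_negf)

lemma bf_sum: "bf n (\<lambda>i. \<Sum>l<T. c l * g l i) z = (\<Sum>l<T. c l * bf n (g l) z)"
  unfolding bf_def by (simp add: sum_distrib_left sum_distrib_right mult.assoc sum.swap[of _ "{..<n}"])

lemma bf_sum_r: "bf n z (\<lambda>i. \<Sum>l<T. c l * g l i) = (\<Sum>l<T. c l * bf n z (g l))"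
  using bf_sum[where z=z and c=c and g=g and T=T and n=n] by (simp add: bf_sym)

lemma bf_cong: "(\<And>i. i < n \<Longrightarrow> x i = x' i) \<Longrightarrow> bf n x y = bf n x' y"
  unfolding bf_def by (rule sum.cong) auto

lemma bf_zero_l: "(\<And>i. i < n \<Longrightarrow> x i = 0) \<Longrightarrow> bf n x y = 0"
  unfolding bf_def by (rule sum.neutral) auto

lemma qf_bf: "qf n x = bf n x x" by (simp add: qf_def bf_def power2_eq_square)

lemma Bq_bf: "Bq n x y = 2 * bf n x y"
  unfolding Bq_def qf_bf bf_add bf_add_r by (simp add: bf_sym[of n y x])

lemma bf_unit: "i < n \<Longrightarrow> bf n x (\<lambda>j. if j = i then 1 else 0) = x i"
  unfolding bf_def by (simp add: if_distrib cong: if_cong)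

definition refl :: "nat \<Rightarrow> (nat \<Rightarrow> 'k::field) \<Rightarrow> (nat \<Rightarrow> 'k) \<Rightarrow> (nat \<Rightarrow> 'k)" where
  "refl M w x = (\<lambda>i. 1 * x i + (- (2 * bf M x w / bf M w w)) * w i)"

lemma refl_iso:
  assumes "bf M w w \<noteq> 0"
  shows "bf M (refl M w x) (refl M w y) = bf M x y"
  unfolding refl_def bf_lin bf_lin_r using assms
  by (simp add: bf_sym[of M w x] bf_sym[of M w y] field_simps)

lemma refl_perp:
  assumes "bf M w g = 0"
  shows "bf M (refl M w x) g = bf M x g"
  unfolding refl_def bf_lin using assms by simp

lemma swap_exists:
  fixes a b :: "nat \<Rightarrow> 'k::field"
  assumes two: "(2::'k) \<noteq> 0" and eq: "bf M a a = bf M b b" and nz: "bf M a a \<noteq> 0"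
  shows "\<exists>\<sigma>. (\<forall>x y. bf M (\<sigma> x) (\<sigma> y) = bf M x y) \<and> \<sigma> a = b \<and>
     (\<forall>x g. bf M a g = 0 \<longrightarrow> bf M b g = 0 \<longrightarrow> bf M (\<sigma> x) g = bf M x g)"
proof (cases "bf M (\<lambda>i. a i - b i) (\<lambda>i. a i - b i) = 0")
  case False
  let ?w = "\<lambda>i. a i - b i"
  have qw: "bf M ?w ?w = 2 * (bf M a a - bf M a b)"
    unfolding bf_diff bf_diff_r using eq by (simp add: bf_sym[of M b a] algebra_simps)
  have aw: "bf M a ?w = bf M a a - bf M a b" unfolding bf_diff_r by simp
  have "refl M ?w a = b"
    unfolding refl_def aw qw using False two qw
    by (auto simp: field_simps)
  moreover have "bf M (refl M ?w x) g = bf M x g" if "bf M a g = 0" "bf M b g = 0" for x g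
    by (rule refl_perp) (simp add: bf_diff that)
  ultimately show ?thesis using refl_iso[OF False] by blast
next
  case True
  let ?w = "\<lambda>i. a i + b i"
  have qm: "bf M (\<lambda>i. a i - b i) (\<lambda>i. a i - b i) = 2 * (bf M a a - bf M a b)"
    unfolding bf_diff bf_diff_r using eq by (simp add: bf_sym[of M b a] algebra_simps)
  have ab: "bf M a b = bf M a a" using True qm two by simp
  have qw: "bf M ?w ?w = 4 * bf M a a"
    unfolding bf_add bf_add_r using eq ab by (simp add: bf_sym[of M b a] algebra_simps)
  have four: "(4::'k) \<noteq> 0" using two by (metis mult_2 numeral_Bit0 mult_eq_0_iff one_add_one)
  have qwnz: "bf M ?w ?w \<noteq> 0" using qw four nz by simp
  have aw: "bf M a ?w = 2 * bf M a a" unfolding bf_add_r ab by simp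
  have r1: "refl M ?w a = (\<lambda>i. - b i)"
    unfolding refl_def aw qw using nz four by (auto simp: field_simps)
  have bnz: "bf M b b \<noteq> 0" using eq nz by simp
  have r2: "refl M b (\<lambda>i. - b i) = b"
    unfolding refl_def bf_neg using bnz by (auto simp: field_simps)
  define \<sigma> where "\<sigma> = (\<lambda>x. refl M b (refl M ?w x))"
  have "\<sigma> a = b" unfolding \<sigma>_def r1 r2 ..
  moreover have "\<forall>x y. bf M (\<sigma> x) (\<sigma> y) = bf M x y"
    unfolding \<sigma>_def using refl_iso[OF bnz] refl_iso[OF qwnz] by simp
  moreover have "bf M (\<sigma> x) g = bf M x g" if "bf M a g = 0" "bf M b g = 0" for x g
    unfolding \<sigma>_def using that by (simp add: refl_perp bf_add)
  ultimately show ?thesis by blast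
qed

lemma Lp:
  fixes a b :: "nat \<Rightarrow> nat \<Rightarrow> 'k::field" and G :: "(nat \<Rightarrow> 'k) set"
  assumes two: "(2::'k) \<noteq> 0"
  and "\<forall>i<t+K. \<forall>j<t+K. i \<noteq> j \<longrightarrow> bf M (a i) (a j) = 0"
  and "\<forall>i<t+K. bf M (a i) (a i) \<noteq> 0"
  and "\<forall>i<t+K. \<forall>g\<in>G. bf M (a i) g = 0"
  and "\<forall>i<t. \<forall>j<t. i \<noteq> j \<longrightarrow> bf M (b i) (b j) = 0"
  and "\<forall>i<t. \<forall>g\<in>G. bf M (b i) g = 0"
  and "\<forall>i<t. bf M (b i) (b i) = bf M (a i) (a i)"
  shows "\<exists>x. (\<forall>i<K. \<forall>j<K. i \<noteq> j \<longrightarrow> bf M (x i) (x j) = 0)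
     \<and> (\<forall>j<K. bf M (x j) (x j) = bf M (a (t+j)) (a (t+j)))
     \<and> (\<forall>j<K. \<forall>g\<in>G. bf M (x j) g = 0) \<and> (\<forall>j<K. \<forall>i<t. bf M (x j) (b i) = 0)"
  using assms(2-)
proof (induction t arbitrary: G a b)
  case 0
  then show ?case by (intro exI[of _ a]) auto
next
  case (Suc t)
  have e: "bf M (a 0) (a 0) = bf M (b 0) (b 0)" "bf M (a 0) (a 0) \<noteq> 0"
    using Suc.prems by auto
  obtain \<sigma> where iso: "\<forall>x y. bf M (\<sigma> x) (\<sigma> y) = bf M x y" and sa: "\<sigma> (a 0) = b 0"
    and pres: "\<forall>x g. bf M (a 0) g = 0 \<longrightarrow> bf M (b 0) g = 0 \<longrightarrow> bf M (\<sigma> x) g = bf M x g"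
    using swap_exists[OF two e] by blast
  define a' where "a' = (\<lambda>i. \<sigma> (a (Suc i)))"
  define b' where "b' = (\<lambda>i. b (Suc i))"
  define G' where "G' = insert (b 0) G"
  have "\<exists>x. (\<forall>i<K. \<forall>j<K. i \<noteq> j \<longrightarrow> bf M (x i) (x j) = 0)
     \<and> (\<forall>j<K. bf M (x j) (x j) = bf M (a' (t+j)) (a' (t+j)))
     \<and> (\<forall>j<K. \<forall>g\<in>G'. bf M (x j) g = 0) \<and> (\<forall>j<K. \<forall>i<t. bf M (x j) (b' i) = 0)"
  proof (rule Suc.IH)
    show "\<forall>i<t + K. \<forall>j<t + K. i \<noteq> j \<longrightarrow> bf M (a' i) (a' j) = 0"
      using Suc.prems(1) by (simp add: a'_def iso)
    show "\<forall>i<t + K. bf M (a' i) (a' i) \<noteq> 0"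
      using Suc.prems(2) by (simp add: a'_def iso)
    show "\<forall>i<t + K. \<forall>g\<in>G'. bf M (a' i) g = 0"
    proof (intro allI impI ballI)
      fix i g assume i: "i < t + K" and g: "g \<in> G'"
      show "bf M (a' i) g = 0"
      proof (cases "g = b 0")
        case True
        then have "bf M (a' i) g = bf M (a (Suc i)) (a 0)"
          unfolding a'_def using iso sa by metis
        then show ?thesis using Suc.prems(1) i by auto
      next
        case False
        then have gG: "g \<in> G" using g G'_def by auto
        have "bf M (a 0) g = 0" "bf M (b 0) g = 0" using Suc.prems(3,5) gG by auto
        then have "bf M (a' i) g = bf M (a (Suc i)) g" unfolding a'_def using pres by blast
        then show ?thesis using Suc.prems(3) i gG by auto
      qed
    qed
    show "\<forall>i<t. \<forall>j<t. i \<noteq> j \<longrightarrow> bf M (b' i) (b' j) = 0"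
      using Suc.prems(4) by (simp add: b'_def)
    show "\<forall>i<t. \<forall>g\<in>G'. bf M (b' i) g = 0"
      using Suc.prems(4,5) by (auto simp add: b'_def G'_def)
    show "\<forall>i<t. bf M (b' i) (b' i) = bf M (a' i) (a' i)"
      using Suc.prems(6) by (simp add: b'_def a'_def iso)
  qed
  then obtain x where x1: "\<forall>i<K. \<forall>j<K. i \<noteq> j \<longrightarrow> bf M (x i) (x j) = 0"
     and x2: "\<forall>j<K. bf M (x j) (x j) = bf M (a' (t+j)) (a' (t+j))"
     and x3: "\<forall>j<K. \<forall>g\<in>G'. bf M (x j) g = 0" and x4: "\<forall>j<K. \<forall>i<t. bf M (x j) (b' i) = 0"
    by blast
  have "\<forall>j<K. bf M (x j) (x j) = bf M (a (Suc t+j)) (a (Suc t+j))"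
    using x2 by (simp add: a'_def iso)
  moreover have "\<forall>j<K. \<forall>g\<in>G. bf M (x j) g = 0" using x3 G'_def by auto
  moreover have "\<forall>j<K. \<forall>i<Suc t. bf M (x j) (b i) = 0"
  proof (intro allI impI)
    fix j i assume j: "j < K" and i: "i < Suc t"
    show "bf M (x j) (b i) = 0"
    proof (cases i)
      case 0 then show ?thesis using x3 j G'_def by auto
    next
      case (Suc i') then show ?thesis using x4 j i b'_def by auto
    qed
  qed
  ultimately show ?case using x1 by blast
qed

lemma bf_restrict:
  assumes "n \<le> M" "\<And>l. n \<le> l \<Longrightarrow> l < M \<Longrightarrow> x l = 0"
  shows "bf M x y = bf n x y"
  unfolding bf_def
  by (rule sum.mono_neutral_right) (use assms in auto)

lemma bf_zero_prod: "(\<And>l. l < M \<Longrightarrow> x l * y l = 0) \<Longrightarrow> bf M x y = 0"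
  unfolding bf_def by (rule sum.neutral) auto

lemma KL:
  fixes f h tt :: "nat \<Rightarrow> nat \<Rightarrow> 'k::field"
  assumes two: "(2::'k) \<noteq> 0"
  and fsupp: "\<forall>j<s. \<forall>l\<ge>n. f j l = 0"
  and hsupp: "\<forall>i<c. \<forall>l\<ge>n. h i l = 0"
  and forth: "\<forall>i<s. \<forall>j<s. i \<noteq> j \<longrightarrow> bf n (f i) (f j) = 0"
  and fnorm: "\<forall>i<s. bf n (f i) (f i) = 1"
  and horth: "\<forall>i<c. \<forall>j<c. i \<noteq> j \<longrightarrow> bf n (h i) (h j) = 0"
  and hnz: "\<forall>i<c. bf n (h i) (h i) \<noteq> 0"
  and hf: "\<forall>i<c. \<forall>j<s. bf n (h i) (f j) = 0"
  and hsq: "\<forall>i<c. bf n (h i) (h i) = (\<Sum>l<p. (tt i l)^2)"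
  and big: "c * p + s < n"
  shows "\<exists>x. (\<forall>l\<ge>n. x l = 0) \<and> bf n x x = 1 \<and> (\<forall>j<s. bf n x (f j) = 0) \<and> (\<forall>i<c. bf n x (h i) = 0)"
proof -
  define M where "M = n + c * p"
  have nM: "n \<le> M" by (simp add: M_def)
  define \<tau> where "\<tau> = (\<lambda>i l. if n + i*p \<le> l \<and> l < n + i*p + p then tt i (l - (n + i*p)) else (0::'k))"
  define e :: "nat \<Rightarrow> nat \<Rightarrow> 'k" where "e = (\<lambda>j l. if l = j then (1::'k) else 0)"
  have fM: "bf M (f j) y = bf n (f j) y" if "j < s" for j y
    by (rule bf_restrict[OF nM]) (use fsupp that in auto)
  have hM: "bf M (h j) y = bf n (h j) y" if "j < c" for j y
    by (rule bf_restrict[OF nM]) (use hsupp that in auto)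
  have eM: "bf M (e j) y = y j" if "j < M" for j y
    using bf_unit[OF that, of y] by (simp add: bf_sym e_def)
  have ee: "bf M (e j) (e j) = 1" if "j < M" for j proof - have "bf M (e j) (e j) = e j j" by (rule eM[OF that]) then show ?thesis by (simp add: e_def) qed
  have tau_norm: "bf M (\<tau> i) (\<tau> i) = (\<Sum>l<p. (tt i l)^2)" if "i < c" for i
  proof -
    have le: "n + i*p + p \<le> M"
    proof -
      have "Suc i * p \<le> c * p" using that by (intro mult_le_mono1) simp
      then show ?thesis by (simp add: M_def)
    qed
    have "bf M (\<tau> i) (\<tau> i) = (\<Sum>l\<in>{n + i*p..<n + i*p + p}. (\<tau> i l)^2)"
      unfolding bf_def power2_eq_square
      by (rule sum.mono_neutral_right) (use le in \<open>auto simp: \<tau>_def\<close>)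
    also have "\<dots> = (\<Sum>l\<in>{0 + (n + i*p)..<p + (n + i*p)}. (tt i (l - (n + i*p)))^2)"
      by (rule sum.cong) (auto simp: \<tau>_def add.commute)
    also have "\<dots> = (\<Sum>l\<in>{0..<p}. (tt i l)^2)"
      by (subst sum.shift_bounds_nat_ivl) simp
    finally show ?thesis by (simp add: atLeast0LessThan)
  qed
  have tau_disj: "\<tau> i l * \<tau> j l = 0" if "i \<noteq> j" for i j l
  proof (cases "i < j")
    case True
    then have "Suc i * p \<le> j * p" by (intro mult_le_mono1) simp
    then show ?thesis by (auto simp: \<tau>_def)
  next
    case False
    then have "Suc j * p \<le> i * p" using that by (intro mult_le_mono1) simp
    then show ?thesis by (auto simp: \<tau>_def)
  qed
  have tau_low: "\<tau> i l = 0" if "l < n" for i l using that by (simp add: \<tau>_def)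
  have tau_perp: "bf M (\<tau> i) y = 0" if "\<forall>l\<ge>n. y l = 0" for i y
    by (rule bf_zero_prod) (use that tau_low in \<open>metis mult_zero_left mult_zero_right not_le\<close>)
  define a where "a = (\<lambda>i. if i < c then \<tau> i else e (i - c))"
  define b where "b = (\<lambda>i. if i < c then h i else f (i - c))"
  have esupp: "\<forall>l\<ge>n. e j l = 0" if "j < n" for j using that by (simp add: e_def)
  have "\<exists>x. (\<forall>i<n-s. \<forall>j<n-s. i \<noteq> j \<longrightarrow> bf M (x i) (x j) = 0)
     \<and> (\<forall>j<n-s. bf M (x j) (x j) = bf M (a ((c+s)+j)) (a ((c+s)+j)))
     \<and> (\<forall>j<n-s. \<forall>g\<in>{}. bf M (x j) g = 0) \<and> (\<forall>j<n-s. \<forall>i<c+s. bf M (x j) (b i) = 0)"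
  proof (rule Lp[OF two])
    have tK: "c + s + (n - s) = c + n" using big by simp
    show "\<forall>i<c + s + (n - s). \<forall>j<c + s + (n - s). i \<noteq> j \<longrightarrow> bf M (a i) (a j) = 0"
    proof (intro allI impI)
      fix i j assume i: "i < c + s + (n - s)" and j: "j < c + s + (n - s)" and ij: "i \<noteq> j"
      show "bf M (a i) (a j) = 0"
      proof (cases "i < c")
        case True
        show ?thesis
        proof (cases "j < c")
          case True
          then show ?thesis using \<open>i < c\<close> ij by (simp add: a_def bf_zero_prod tau_disj)
        next
          case False
          then show ?thesis using \<open>i < c\<close> j tK by (simp add: a_def tau_perp esupp)
        qed
      next
        case False
        show ?thesis
        proof (cases "j < c")
          case True
          then show ?thesis using \<open>\<not> i < c\<close> i tK by (simp add: a_def tau_perp esupp bf_sym[of M "e _"])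
        next
          case False
          have "bf M (a i) (a j) = e (j - c) (i - c)"
            using False \<open>\<not> i < c\<close> i tK nM by (simp add: a_def eM)
          then show ?thesis using \<open>\<not> i < c\<close> False ij by (simp add: e_def)
        qed
      qed
    qed
    show "\<forall>i<c + s + (n - s). bf M (a i) (a i) \<noteq> 0"
      using hnz hsq tK nM by (auto simp: a_def tau_norm ee)
    show "\<forall>i<c + s + (n - s). \<forall>g\<in>{}. bf M (a i) g = 0" by simp
    show "\<forall>i<c + s. \<forall>j<c + s. i \<noteq> j \<longrightarrow> bf M (b i) (b j) = 0"
    proof (intro allI impI)
      fix i j assume i: "i < c + s" and j: "j < c + s" and ij: "i \<noteq> j"
      show "bf M (b i) (b j) = 0"
      proof (cases "i < c")
        case True
        then show ?thesis using horth hf ij j by (cases "j < c") (auto simp: b_def hM)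
      next
        case False
        show ?thesis
        proof (cases "j < c")
          case True
          have "bf M (b i) (b j) = bf n (h j) (f (i - c))"
            using True False by (simp add: b_def hM bf_sym)
          then show ?thesis using hf True False i by simp
        next
          case False
          then show ?thesis using \<open>\<not> i < c\<close> forth ij i j by (auto simp: b_def fM)
        qed
      qed
    qed
    show "\<forall>i<c + s. \<forall>g\<in>{}. bf M (b i) g = 0" by simp
    show "\<forall>i<c + s. bf M (b i) (b i) = bf M (a i) (a i)"
      using hsq fnorm big nM by (auto simp: a_def b_def hM fM tau_norm ee)
  qed
  then obtain x where x1: "\<forall>i<n-s. \<forall>j<n-s. i \<noteq> j \<longrightarrow> bf M (x i) (x j) = 0"
    and x2: "\<forall>j<n-s. bf M (x j) (x j) = bf M (a ((c+s)+j)) (a ((c+s)+j))"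
    and x4: "\<forall>j<n-s. \<forall>i<c+s. bf M (x j) (b i) = 0" by blast
  have x2': "\<forall>j<n-s. bf M (x j) (x j) = 1"
    using x2 nM by (auto simp: a_def ee)
  have xh: "bf M (x j) (h i) = 0" if "j < n-s" "i < c" for i j
    using x4[rule_format, of j i] that by (simp add: b_def)
  have xf: "bf M (x j) (f i) = 0" if "j < n-s" "i < s" for i j
    using x4[rule_format, of j "c + i"] that by (simp add: b_def)
  define G where "G = h ` {..<c} \<union> f ` {..<s}"
  define eps where "eps = (\<lambda>j. e (n + j))"
  have "\<exists>y. (\<forall>i<1. \<forall>j<1. i \<noteq> j \<longrightarrow> bf M (y i) (y j) = 0)
     \<and> (\<forall>j<1. bf M (y j) (y j) = bf M (x (c*p+j)) (x (c*p+j)))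
     \<and> (\<forall>j<1. \<forall>g\<in>G. bf M (y j) g = 0) \<and> (\<forall>j<1. \<forall>i<c*p. bf M (y j) (eps i) = 0)"
  proof (rule Lp[OF two])
    show "\<forall>i<c * p + 1. \<forall>j<c * p + 1. i \<noteq> j \<longrightarrow> bf M (x i) (x j) = 0"
      using x1 big by auto
    show "\<forall>i<c * p + 1. bf M (x i) (x i) \<noteq> 0" using x2' big by auto
    show "\<forall>i<c * p + 1. \<forall>g\<in>G. bf M (x i) g = 0" using xh xf big by (auto simp: G_def)
    show "\<forall>i<c * p. \<forall>j<c * p. i \<noteq> j \<longrightarrow> bf M (eps i) (eps j) = 0"
    proof (intro allI impI)
      fix i j assume i: "i < c * p" and j: "j < c * p" and ij: "i \<noteq> j"
      have "bf M (eps i) (eps j) = eps j (n + i)" unfolding eps_def by (rule eM) (use i in \<open>simp add: M_def\<close>)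
      then show "bf M (eps i) (eps j) = 0" using ij by (simp add: eps_def e_def)
    qed
    show "\<forall>i<c * p. \<forall>g\<in>G. bf M (eps i) g = 0"
    proof (intro allI impI ballI)
      fix i g assume i: "i < c * p" and g: "g \<in> G"
      have "bf M (eps i) g = g (n + i)" unfolding eps_def by (rule eM) (use i in \<open>simp add: M_def\<close>)
      then show "bf M (eps i) g = 0" using g hsupp fsupp by (auto simp: G_def)
    qed
    show "\<forall>i<c * p. bf M (eps i) (eps i) = bf M (x i) (x i)"
      using x2' big ee by (auto simp: eps_def M_def)
  qed
  then obtain y where y2: "bf M (y 0) (y 0) = bf M (x (c*p)) (x (c*p))"
    and y3: "\<forall>g\<in>G. bf M (y 0) g = 0" and y4: "\<forall>i<c*p. bf M (y 0) (eps i) = 0" by auto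
  have yz: "y 0 l = 0" if "n \<le> l" "l < M" for l
  proof -
    have "l - n < c * p" using that by (simp add: M_def)
    then have "bf M (y 0) (eps (l - n)) = 0" using y4 by blast
    moreover have "bf M (y 0) (eps (l - n)) = y 0 l"
      using that bf_unit[of l M "y 0"] by (simp add: eps_def e_def)
    ultimately show ?thesis by simp
  qed
  have yM: "bf M (y 0) z = bf n (y 0) z" for z by (rule bf_restrict[OF nM yz])
  define z where "z = (\<lambda>l. if l < n then y 0 l else 0)"
  have zy: "bf n z w = bf n (y 0) w" for w by (rule bf_cong) (simp add: z_def)
  have "bf n z z = bf n (y 0) z" by (rule zy)
  also have "\<dots> = bf n z (y 0)" by (rule bf_sym)
  also have "\<dots> = bf n (y 0) (y 0)" by (rule zy)
  also have "\<dots> = bf M (y 0) (y 0)" by (simp add: yM)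
  also have "\<dots> = 1" using y2 x2' big by simp
  finally have "bf n z z = 1" .
  moreover have "\<forall>j<s. bf n z (f j) = 0" using y3 by (auto simp: zy yM G_def)
  moreover have "\<forall>i<c. bf n z (h i) = 0" using y3 by (auto simp: zy yM G_def)
  moreover have "\<forall>l\<ge>n. z l = 0" by (simp add: z_def)
  ultimately show ?thesis by blast
qed



lemma val_total:
  assumes val: "valuation_ring TYPE('a::idom)"
  shows "(x::'a) dvd y \<or> y dvd x"
proof (cases "x = 0 \<or> y = 0")
  case True then show ?thesis by auto
next
  case False
  then have x: "x \<noteq> 0" and y: "y \<noteq> 0" by auto
  have z: "Fract y x \<noteq> 0" using x y by (simp add: Zero_fract_def eq_fract)
  from val[unfolded valuation_ring_def, rule_format, OF z]
  show ?thesis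
  proof
    assume "Fract y x \<in> range (\<lambda>a. Fract a 1)"
    then obtain a where "Fract y x = Fract a 1" by auto
    then have "y * 1 = a * x" using x by (simp add: eq_fract)
    then show ?thesis by (metis dvd_triv_right mult_1_right)
  next
    assume "inverse (Fract y x) \<in> range (\<lambda>a. Fract a 1)"
    then obtain a where "Fract x y = Fract a 1" by auto
    then have "x * 1 = a * y" using y by (simp add: eq_fract)
    then show ?thesis by (metis dvd_triv_right mult_1_right)
  qed
qed

lemma min_div:
  fixes w :: "nat \<Rightarrow> 'a::comm_ring_1"
  assumes tot: "\<And>x y::'a. x dvd y \<or> y dvd x" and n: "0 < n"
  shows "\<exists>i<n. \<forall>j<n. w i dvd w j"
  using n
proof (induction n)
  case 0 then show ?case by simp
next
  case (Suc n)
  show ?case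
  proof (cases "n = 0")
    case True then show ?thesis by auto
  next
    case False
    then obtain i where i: "i < n" "\<forall>j<n. w i dvd w j" using Suc.IH by auto
    show ?thesis
    proof (cases "w i dvd w n")
      case True
      then show ?thesis using i by (intro exI[of _ i]) (auto simp: less_Suc_eq)
    next
      case False
      then have "w n dvd w i" using tot by blast
      then show ?thesis using i by (intro exI[of _ n]) (auto simp: less_Suc_eq intro: dvd_trans)
    qed
  qed
qed

definition pj :: "nat \<Rightarrow> (nat \<Rightarrow> nat \<Rightarrow> 'b::comm_ring_1) \<Rightarrow> (nat \<Rightarrow> 'b) \<Rightarrow> nat \<Rightarrow> (nat \<Rightarrow> 'b) \<Rightarrow> (nat \<Rightarrow> 'b)" where
  "pj n g c T x = (\<lambda>i. x i - (\<Sum>l<T. (c l * bf n x (g l)) * g l i))"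

lemma pj_perp:
  assumes orth: "\<forall>l<T. \<forall>m<T. l \<noteq> m \<longrightarrow> bf n (g l) (g m) = 0"
    and inv: "\<forall>l<T. c l * bf n (g l) (g l) = 1" and m: "m < T"
  shows "bf n (pj n g c T x) (g m) = 0"
proof -
  have "(\<Sum>l<T. (c l * bf n x (g l)) * bf n (g l) (g m))
      = (\<Sum>l<T. if l = m then bf n x (g m) else 0)"
  proof (rule sum.cong)
    fix l assume l: "l \<in> {..<T}"
    show "(c l * bf n x (g l)) * bf n (g l) (g m) = (if l = m then bf n x (g m) else 0)"
    proof (cases "l = m")
      case True
      have "(c m * bf n x (g m)) * bf n (g m) (g m) = bf n x (g m) * (c m * bf n (g m) (g m))"
        by (simp add: algebra_simps)
      then show ?thesis using True inv m by simp
    next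
      case False then show ?thesis using orth l m by simp
    qed
  qed simp
  also have "\<dots> = bf n x (g m)" using m by simp
  finally show ?thesis unfolding pj_def bf_diff bf_sum by simp
qed

lemma pj_self:
  assumes "\<forall>l<T. bf n y (g l) = 0"
  shows "bf n y (pj n g c T x) = bf n y x"
  unfolding pj_def bf_diff_r bf_sum_r using assms by simp

lemma pj_vecs:
  assumes "\<forall>l<T. g l \<in> vecs n" "x \<in> vecs n"
  shows "pj n g c T x \<in> vecs n"
  using assms unfolding pj_def vecs_def by auto

definition ofam :: "('a::comm_ring_1 \<Rightarrow> 'k::field) \<Rightarrow> nat \<Rightarrow> (nat \<Rightarrow> nat \<Rightarrow> 'a) \<Rightarrow> nat \<Rightarrow> bool" where
  "ofam \<pi> n g T \<longleftrightarrow> (\<forall>l<T. g l \<in> vecs n \<and> \<pi> (bf n (g l) (g l)) \<noteq> 0)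
      \<and> (\<forall>l<T. \<forall>m<T. l \<noteq> m \<longrightarrow> bf n (g l) (g m) = 0)"

locale resm =
  fixes \<pi> :: "'a::idom \<Rightarrow> 'k::field"
  assumes rm: "residue_map \<pi>" and two: "(2::'a) dvd 1"
begin

lemma pi_facts: "\<pi> 1 = 1 \<and> (\<forall>x y. \<pi> (x + y) = \<pi> x + \<pi> y)
     \<and> (\<forall>x y. \<pi> (x * y) = \<pi> x * \<pi> y) \<and> surj \<pi>
     \<and> (\<forall>x. \<pi> x = 0 \<longleftrightarrow> \<not> x dvd 1)"
  using rm[unfolded residue_map_def] .
lemma pi_add: "\<pi> (x + y) = \<pi> x + \<pi> y" using pi_facts by (elim conjE allE)
lemma pi_mult: "\<pi> (x * y) = \<pi> x * \<pi> y" using pi_facts by (elim conjE allE)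
lemma pi_one: "\<pi> 1 = 1" using pi_facts by (elim conjE)
lemma pi_unit: "\<pi> x \<noteq> 0 \<longleftrightarrow> x dvd 1"
proof -
  have "\<forall>x. \<pi> x = 0 \<longleftrightarrow> \<not> x dvd 1" using pi_facts by (elim conjE)
  then show ?thesis by blast
qed
lemma pi_surj: "surj \<pi>" using pi_facts by (elim conjE)
lemma pi_zero: "\<pi> 0 = 0"
proof -
  have "\<pi> (0 + 0) = \<pi> 0 + \<pi> 0" by (rule pi_add)
  then have "\<pi> 0 + \<pi> 0 = \<pi> 0 + 0" by (simp only: add_0_right)
  then show ?thesis by (simp only: add_left_cancel)
qed
lemma pi_neg: "\<pi> (- x) = - \<pi> x"
proof -
  have "\<pi> (- x) + \<pi> x = 0" using pi_add[of "- x" x] pi_zero by simp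
  then show ?thesis by (simp add: eq_neg_iff_add_eq_0)
qed
lemma pi_diff: "\<pi> (x - y) = \<pi> x - \<pi> y" using pi_add[of x "- y"] pi_neg by simp
lemma pi_sum: "\<pi> (\<Sum>i\<in>S. f i) = (\<Sum>i\<in>S. \<pi> (f i))"
  by (induction S rule: infinite_finite_induct) (auto simp: pi_zero pi_add)
lemma pi_pow: "\<pi> (x ^ m) = \<pi> x ^ m"
  by (induction m) (auto simp: pi_one pi_mult)
lemma pi_two: "\<pi> 2 = 2"
proof -
  have "\<pi> (1 + 1) = \<pi> 1 + \<pi> 1" by (rule pi_add)
  then show ?thesis by (simp only: one_add_one pi_one)
qed
lemma two_k: "(2::'k) \<noteq> 0" using pi_unit[of 2] two pi_two by metis
lemma two_a: "(2::'a) \<noteq> 0" using two by (metis dvd_0_left_iff zero_neq_one)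
lemma pi_bf: "\<pi> (bf n x y) = bf n (\<lambda>i. \<pi> (x i)) (\<lambda>i. \<pi> (y i))"
  unfolding bf_def pi_sum pi_mult ..
lemma unit_inv: "\<pi> x \<noteq> 0 \<Longrightarrow> \<exists>c. c * x = 1"
  using pi_unit by (metis dvd_def mult.commute)

end



lemma bf_cong_r: "(\<And>i. i < n \<Longrightarrow> y i = y' i) \<Longrightarrow> bf n x y = bf n x y'"
  unfolding bf_def by (rule sum.cong) auto

context resm begin

lemma inv_fam:
  assumes "ofam \<pi> n g T"
  obtains c where "\<forall>l<T. c l * bf n (g l) (g l) = 1"
proof -
  have "\<forall>l. \<exists>c. l < T \<longrightarrow> c * bf n (g l) (g l) = 1"
    using assms unfolding ofam_def by (metis unit_inv)
  from choice[OF this] obtain c where "\<forall>l. l < T \<longrightarrow> c l * bf n (g l) (g l) = 1" by blast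
  then show ?thesis using that by blast
qed

lemma ofam_ext1:
  assumes fam: "ofam \<pi> n g T" and hv: "h \<in> vecs n" and hu: "\<pi> (bf n h h) \<noteq> 0"
    and hp: "\<forall>m<T. bf n h (g m) = 0"
  shows "ofam \<pi> n (g(T := h)) (Suc T)"
  unfolding ofam_def
proof (intro conjI allI impI)
  fix l assume l: "l < Suc T"
  show "(g(T := h)) l \<in> vecs n" using l fam hv by (cases "l = T") (auto simp: ofam_def)
  show "\<pi> (bf n ((g(T := h)) l) ((g(T := h)) l)) \<noteq> 0"
    using l fam hu by (cases "l = T") (auto simp: ofam_def)
next
  fix l m assume l: "l < Suc T" and m: "m < Suc T" and lm: "l \<noteq> m"
  show "bf n ((g(T := h)) l) ((g(T := h)) m) = 0"
  proof (cases "l = T")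
    case True
    then show ?thesis using lm m hp by simp
  next
    case False
    show ?thesis
    proof (cases "m = T")
      case True
      then have "bf n ((g(T := h)) l) ((g(T := h)) m) = bf n h (g l)"
        using False by (simp add: bf_sym)
      then show ?thesis using hp l False by simp
    next
      case False
      then show ?thesis using \<open>l \<noteq> T\<close> l m lm fam by (simp add: ofam_def)
    qed
  qed
qed

lemma core:
  assumes val: "valuation_ring TYPE('a)" and fam: "ofam \<pi> n g T" and wv: "w \<in> vecs n"
  shows "\<exists>T' g'. T \<le> T' \<and> T' \<le> T + 2 \<and> (formally_real TYPE('k) \<longrightarrow> T' \<le> T + 1)
     \<and> ofam \<pi> n g' T' \<and> (\<forall>l<T. g' l = g l) \<and> (\<forall>x. (\<forall>l<T'. bf n x (g' l) = 0) \<longrightarrow> bf n x w = 0)"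
proof -
  obtain c where inv: "\<forall>l<T. c l * bf n (g l) (g l) = 1" using inv_fam[OF fam] by blast
  have orth: "\<forall>l<T. \<forall>m<T. l \<noteq> m \<longrightarrow> bf n (g l) (g m) = 0" and gv: "\<forall>l<T. g l \<in> vecs n"
    and gu: "\<forall>l<T. \<pi> (bf n (g l) (g l)) \<noteq> 0" using fam unfolding ofam_def by auto
  define w' where "w' = pj n g c T w"
  have w'perp: "bf n w' (g m) = 0" if "m < T" for m unfolding w'_def by (rule pj_perp[OF orth inv that])
  have w'eq: "bf n x w = bf n x w'" if "\<forall>l<T. bf n x (g l) = 0" for x
    unfolding w'_def using pj_self[OF that] by simp
  have w'v: "w' \<in> vecs n" unfolding w'_def by (rule pj_vecs[OF gv wv])
  show ?thesis
  proof (cases "\<forall>i<n. w' i = 0")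
    case True
    have "bf n x w = 0" if "\<forall>l<T. bf n x (g l) = 0" for x
      using w'eq[OF that] bf_zero_l[of n w' x] True by (simp add: bf_sym)
    then show ?thesis using fam by (intro exI[of _ T] exI[of _ g]) auto
  next
    case False
    then obtain j0 where j0: "j0 < n" "w' j0 \<noteq> 0" by auto
    obtain i where i: "i < n" "\<forall>j<n. w' i dvd w' j"
      using min_div[OF val_total[OF val], of n w'] j0 by auto
    have wi: "w' i \<noteq> 0" using i j0 by (metis dvd_0_left)
    have "\<forall>j. \<exists>d. j < n \<longrightarrow> w' j = w' i * d" using i by (auto simp: dvd_def)
    from choice[OF this] obtain d where d: "\<forall>j. j < n \<longrightarrow> w' j = w' i * d j" ..
    define w'' where "w'' = (\<lambda>j. if j < n then (if j = i then 1 else d j) else (0::'a))"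
    have w'w'': "w' j = w' i * w'' j" if "j < n" for j
    proof (cases "j = i")
      case True then show ?thesis using that by (simp add: w''_def)
    next
      case False then show ?thesis using that d by (simp add: w''_def)
    qed
    have bfw': "bf n y w' = w' i * bf n y w''" for y
    proof -
      have "bf n y w' = bf n y (\<lambda>j. w' i * w'' j)" by (rule bf_cong_r) (simp add: w'w'')
      then show ?thesis by (simp add: bf_scale_r)
    qed
    have w''v: "w'' \<in> vecs n" by (simp add: w''_def vecs_def)
    have w''i: "w'' i = 1" using i by (simp add: w''_def)
    have w''perp: "bf n w'' (g m) = 0" if "m < T" for m
    proof -
      have "w' i * bf n (g m) w'' = 0" using bfw'[of "g m"] w'perp[OF that] by (simp add: bf_sym)
      then show ?thesis using wi by (simp add: bf_sym)
    qed
    define e where "e = (\<lambda>j. if j = i then (1::'a) else 0)"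
    have ev: "e \<in> vecs n" using i by (simp add: e_def vecs_def)
    define z where "z = pj n g c T e"
    have zv: "z \<in> vecs n" unfolding z_def by (rule pj_vecs[OF gv ev])
    have zperp: "bf n z (g m) = 0" if "m < T" for m unfolding z_def by (rule pj_perp[OF orth inv that])
    have w''z: "bf n w'' z = 1"
    proof -
      have "bf n w'' z = bf n w'' e" unfolding z_def by (rule pj_self) (use w''perp in auto)
      also have "\<dots> = w'' i" unfolding e_def by (rule bf_unit[OF i(1)])
      finally show ?thesis using w''i by simp
    qed
    have xw: "bf n x w = w' i * bf n x w''" if "\<forall>l<T. bf n x (g l) = 0" for x
      using w'eq[OF that] bfw' by simp
    define \<alpha> where "\<alpha> = bf n w'' w''"
    show ?thesis
    proof (cases "\<pi> \<alpha> = 0")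
      case False
      have fam': "ofam \<pi> n (g(T := w'')) (Suc T)"
        by (rule ofam_ext1[OF fam w''v]) (use False w''perp in \<open>auto simp: \<alpha>_def\<close>)
      have "bf n x w = 0" if "\<forall>l<Suc T. bf n x ((g(T := w'')) l) = 0" for x
      proof -
        have "\<forall>l<T. bf n x (g l) = 0"
        proof (intro allI impI)
          fix l assume "l < T" then show "bf n x (g l) = 0" using that[rule_format, of l] by simp
        qed
        moreover have "bf n x w'' = 0" using that[rule_format, of T] by simp
        ultimately show ?thesis using xw by simp
      qed
      then show ?thesis using fam' by (intro exI[of _ "Suc T"] exI[of _ "g(T := w'')"]) auto
    next
      case True
      have nfr: "\<not> formally_real TYPE('k)"
      proof
        assume fr: "formally_real TYPE('k)"
        define a where "a = (\<lambda>j. if j = i then 0 else \<pi> (w'' j))"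
        have s1: "\<pi> \<alpha> = (\<Sum>j<n. (\<pi> (w'' j))^2)"
          unfolding \<alpha>_def pi_bf by (simp add: bf_def power2_eq_square)
        have s2: "(\<Sum>j<n. (\<pi> (w'' j))^2) = 1 + (\<Sum>j\<in>{..<n}-{i}. (\<pi> (w'' j))^2)"
          using i(1) w''i by (simp add: sum.remove pi_one)
        have s3: "(\<Sum>j<n. (a j)^2) = (\<Sum>j\<in>{..<n}-{i}. (\<pi> (w'' j))^2)"
          using i(1) by (simp add: sum.remove a_def)
        have "(-1::'k) = (\<Sum>j<n. (a j)^2)" using s1 s2 s3 True
          by (metis add.commute add_eq_0_iff)
        then have "sum_of_squares (-1::'k)" unfolding sum_of_squares_def sum_of_p_squares_def by blast
        then show False using fr unfolding formally_real_def by simp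
      qed
      define \<beta> where "\<beta> = bf n z z"
      define \<epsilon> where "\<epsilon> = (if \<pi> (\<alpha> + 2 + \<beta>) \<noteq> 0 then (1::'a) else -1)"
      have eps2: "\<epsilon> * \<epsilon> = 1" by (simp add: \<epsilon>_def)
      have pieps2: "\<pi> \<epsilon> * \<pi> \<epsilon> = 1" using eps2 pi_mult pi_one by metis
      define h1 where "h1 = (\<lambda>j. 1 * w'' j + \<epsilon> * z j)"
      have w''h1: "bf n w'' h1 = \<alpha> + \<epsilon>" unfolding h1_def bf_lin_r \<alpha>_def w''z by simp
      have zh1: "bf n z h1 = \<epsilon> * \<beta> + 1" unfolding h1_def bf_lin_r \<beta>_def using w''z by (simp add: bf_sym)
      have qh1: "bf n h1 h1 = \<alpha> + 2 * \<epsilon> + \<beta>"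
      proof -
        have "bf n h1 h1 = bf n w'' h1 + \<epsilon> * bf n z h1" unfolding h1_def[of] bf_lin by simp
        also have "\<dots> = \<alpha> + \<epsilon> + \<epsilon> * (\<epsilon> * \<beta> + 1)" using w''h1 zh1 by simp
        also have "\<dots> = \<alpha> + 2 * \<epsilon> + (\<epsilon> * \<epsilon>) * \<beta>" by (simp add: algebra_simps)
        finally show ?thesis using eps2 by simp
      qed
      have pih1: "\<pi> (bf n h1 h1) \<noteq> 0"
      proof (cases "\<pi> (\<alpha> + 2 + \<beta>) \<noteq> 0")
        case True
        then show ?thesis using qh1 by (simp add: \<epsilon>_def)
      next
        case False
        then have e: "\<epsilon> = -1" by (simp add: \<epsilon>_def)
        have s0: "\<pi> \<alpha> + 2 + \<pi> \<beta> = 0" using False by (simp add: pi_add pi_two)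
        have hx: "\<pi> (bf n h1 h1) = (\<pi> \<alpha> + 2 + \<pi> \<beta>) - 2 - 2"
          unfolding qh1 e by (simp add: pi_add pi_neg pi_two pi_diff algebra_simps)
        have "(-2 - 2::'k) = - (2 * 2)" by simp
        then have "\<pi> (bf n h1 h1) = - (2 * 2)" using hx s0 by simp
        moreover have "(2 * 2::'k) \<noteq> 0" by (intro no_zero_divisors two_k)
        ultimately show ?thesis by (metis neg_equal_0_iff_equal)
      qed
      obtain \<gamma> where \<gamma>: "\<gamma> * bf n h1 h1 = 1" using unit_inv[OF pih1] by blast
      define lam where "lam = bf n w'' h1 * \<gamma>"
      define h2 where "h2 = (\<lambda>j. 1 * w'' j + (- lam) * h1 j)"
      have h21: "bf n h2 h1 = 0"
      proof -
        have "bf n h2 h1 = bf n w'' h1 - bf n w'' h1 * (\<gamma> * bf n h1 h1)"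
          unfolding h2_def bf_lin lam_def by (simp add: algebra_simps)
        then show ?thesis using \<gamma> by simp
      qed
      have qh2: "bf n h2 h2 = \<alpha> - lam * bf n w'' h1"
      proof -
        have "bf n h2 h2 = bf n w'' h2 - lam * bf n h1 h2" unfolding h2_def[of] bf_lin by simp
        also have "bf n h1 h2 = 0" using h21 by (simp add: bf_sym)
        also have "bf n w'' h2 = \<alpha> - lam * bf n w'' h1" unfolding h2_def bf_lin_r \<alpha>_def by simp
        finally show ?thesis by simp
      qed
      have pih2: "\<pi> (bf n h2 h2) \<noteq> 0"
      proof -
        have "\<pi> (bf n h2 h2) = \<pi> \<alpha> - \<pi> (bf n w'' h1) * \<pi> \<gamma> * \<pi> (bf n w'' h1)"
          unfolding qh2 lam_def by (simp add: pi_diff pi_mult)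
        also have "\<pi> (bf n w'' h1) = \<pi> \<epsilon>" unfolding w''h1 using True \<alpha>_def by (simp add: pi_add)
        finally have "\<pi> (bf n h2 h2) = - (\<pi> \<epsilon> * \<pi> \<epsilon>) * \<pi> \<gamma>" using True by (simp add: algebra_simps)
        then have "\<pi> (bf n h2 h2) = - \<pi> \<gamma>" using pieps2 by simp
        moreover have "\<pi> \<gamma> \<noteq> 0" using \<gamma> pi_mult pi_one by (metis mult_zero_left zero_neq_one)
        ultimately show ?thesis by simp
      qed
      have h1perp: "bf n h1 (g m) = 0" if "m < T" for m
        unfolding h1_def bf_lin using w''perp[OF that] zperp[OF that] by simp
      have h2perp: "bf n h2 (g m) = 0" if "m < T" for m
        unfolding h2_def bf_lin using w''perp[OF that] h1perp[OF that] by simp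
      have h1v: "h1 \<in> vecs n" using w''v zv by (simp add: h1_def vecs_def)
      have h2v: "h2 \<in> vecs n" using w''v h1v by (simp add: h2_def vecs_def)
      have fam1: "ofam \<pi> n (g(T := h1)) (Suc T)"
        by (rule ofam_ext1[OF fam h1v pih1]) (use h1perp in auto)
      have fam2: "ofam \<pi> n (g(T := h1, Suc T := h2)) (Suc (Suc T))"
        by (rule ofam_ext1[OF fam1 h2v pih2]) (use h2perp h21 in \<open>auto simp: less_Suc_eq\<close>)
      have w''dec: "w'' = (\<lambda>j. 1 * h2 j + lam * h1 j)" by (rule ext) (simp add: h2_def)
      have "bf n x w = 0" if "\<forall>l<Suc (Suc T). bf n x ((g(T := h1, Suc T := h2)) l) = 0" for x
      proof -
        have "\<forall>l<T. bf n x (g l) = 0"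
        proof (intro allI impI)
          fix l assume "l < T" then show "bf n x (g l) = 0" using that[rule_format, of l] by simp
        qed
        moreover have "bf n x h1 = 0" using that[rule_format, of T] by simp
        moreover have "bf n x h2 = 0" using that[rule_format, of "Suc T"] by simp
        ultimately show ?thesis using xw by (simp add: w''dec bf_add_r bf_scale_r)
      qed
      then show ?thesis using fam2 nfr
        by (intro exI[of _ "Suc (Suc T)"] exI[of _ "g(T := h1, Suc T := h2)"]) auto
    qed
  qed
qed

end


lemma sum_fun_apply: "(sum f S :: nat \<Rightarrow> 'k::comm_ring_1) j = (\<Sum>v\<in>S. f v j)"
  by (induction S rule: infinite_finite_induct) auto

lemma steinitz:
  fixes gg :: "nat \<Rightarrow> nat \<Rightarrow> 'k::field"
  assumes "\<forall>i<n. \<exists>c. (\<lambda>j. if j = i then 1 else 0) = (\<lambda>j. \<Sum>l<T. c l * gg l j)"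
  shows "n \<le> T"
proof -
  interpret fv: vector_space "\<lambda>(c::'k) (x::nat \<Rightarrow> 'k). (\<lambda>j. c * x j)"
    by unfold_locales (auto simp: algebra_simps fun_eq_iff)
  define e :: "nat \<Rightarrow> nat \<Rightarrow> 'k" where "e = (\<lambda>i j. if j = i then 1 else 0)"
  define E where "E = e ` {..<n}"
  define G where "G = gg ` {..<T}"
  have inj: "inj_on e {..<n}"
    by (rule inj_onI) (metis e_def one_neq_zero)
  have cardE: "card E = n" unfolding E_def using card_image[OF inj] by simp
  have indep: "fv.independent E"
    unfolding fv.dependent_explicit
  proof clarify
    fix t u v assume t: "finite t" "t \<subseteq> E" and s: "(\<Sum>v\<in>t. (\<lambda>j. u v * v j)) = 0"
      and v: "v \<in> t" "u v \<noteq> 0"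
    obtain i where i: "i < n" "v = e i" using t v E_def by auto
    have "0 = (\<Sum>v\<in>t. (\<lambda>j. u v * v j)) i" using s by simp
    also have "\<dots> = (\<Sum>w\<in>t. u w * w i)" by (rule sum_fun_apply)
    also have "\<dots> = (\<Sum>w\<in>t. if w = v then u v else 0)"
    proof (rule sum.cong)
      fix w assume w: "w \<in> t"
      then obtain k where k: "w = e k" using t E_def by auto
      show "u w * w i = (if w = v then u v else 0)"
      proof (cases "k = i")
        case True then show ?thesis using i k by (simp add: e_def)
      next
        case False
        have "w i = 0" using False k by (simp add: e_def)
        moreover have "w k \<noteq> v k" using False k i by (simp add: e_def)
        then have "w \<noteq> v" by metis
        ultimately show ?thesis by simp
      qed
    qed simp
    also have "\<dots> = u v" using t v by simp
    finally show False using v by simp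
  qed
  have sub: "E \<subseteq> fv.span G"
  proof
    fix x assume "x \<in> E"
    then obtain i where i: "i < n" "x = e i" using E_def by auto
    obtain c where c: "e i = (\<lambda>j. \<Sum>l<T. c l * gg l j)" using assms i unfolding e_def by blast
    have "(\<lambda>j. \<Sum>l<T. c l * gg l j) = (\<Sum>l<T. (\<lambda>j. c l * gg l j))"
      by (rule ext) (simp add: sum_fun_apply)
    also have "\<dots> \<in> fv.span G"
      by (intro fv.span_sum fv.span_scale fv.span_base) (auto simp: G_def)
    finally show "x \<in> fv.span G" using i c by simp
  qed
  have "card E \<le> card G" using fv.independent_span_bound[OF _ indep sub] G_def by auto
  also have "card G \<le> T" unfolding G_def using card_image_le[of "{..<T}" gg] by simp
  finally show ?thesis using cardE by simp
qed



context resm begin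

lemma extend1:
  assumes fam: "ofam \<pi> n g T" and Tn: "T < n"
  shows "\<exists>h. h \<in> vecs n \<and> \<pi> (bf n h h) \<noteq> 0 \<and> (\<forall>m<T. bf n h (g m) = 0)"
proof (rule ccontr)
  assume neg: "\<not> ?thesis"
  obtain c where inv: "\<forall>l<T. c l * bf n (g l) (g l) = 1" using inv_fam[OF fam] by blast
  have orth: "\<forall>l<T. \<forall>m<T. l \<noteq> m \<longrightarrow> bf n (g l) (g m) = 0" and gv: "\<forall>l<T. g l \<in> vecs n"
    using fam unfolding ofam_def by auto
  define e :: "nat \<Rightarrow> nat \<Rightarrow> 'a" where "e = (\<lambda>i j. if j = i then (1::'a) else 0)"
  define P where "P = (\<lambda>i. pj n g c T (e i))"
  have ev: "e i \<in> vecs n" if "i < n" for i using that by (simp add: e_def vecs_def)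
  have Pv: "P i \<in> vecs n" if "i < n" for i unfolding P_def by (rule pj_vecs[OF gv ev[OF that]])
  have Pperp: "\<forall>m<T. bf n (P i) (g m) = 0" for i unfolding P_def using pj_perp[OF orth inv] by blast
  have zero: "\<pi> (bf n h h) = 0" if "h \<in> vecs n" "\<forall>m<T. bf n h (g m) = 0" for h
    using neg that by blast
  have key: "\<pi> (bf n (P i) (P j)) = 0" if "i < n" "j < n" for i j
  proof -
    define s where "s = (\<lambda>l. P i l + P j l)"
    have sv: "s \<in> vecs n" using Pv[OF that(1)] Pv[OF that(2)] by (simp add: s_def vecs_def)
    have sp: "\<forall>m<T. bf n s (g m) = 0" using Pperp by (simp add: s_def bf_add)
    have "bf n s s = bf n (P i) (P i) + 2 * bf n (P i) (P j) + bf n (P j) (P j)"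
      unfolding s_def bf_add bf_add_r by (simp add: bf_sym[of n "P j" "P i"] algebra_simps)
    then have "\<pi> (bf n s s) = \<pi> (bf n (P i) (P i)) + 2 * \<pi> (bf n (P i) (P j)) + \<pi> (bf n (P j) (P j))"
      by (simp add: pi_add pi_mult pi_two)
    then have "2 * \<pi> (bf n (P i) (P j)) = 0"
      using zero[OF sv sp] zero[OF Pv[OF that(1)] Pperp] zero[OF Pv[OF that(2)] Pperp] by simp
    then show ?thesis using two_k by simp
  qed
  have entry: "bf n (P i) (P j) = e i j - (\<Sum>l<T. c l * g l i * g l j)" if "i < n" "j < n" for i j
  proof -
    have a: "bf n (P i) (pj n g c T (e j)) = bf n (P i) (e j)" by (rule pj_self) (use Pperp in auto)
    have "bf n (P i) (P j) = bf n (P i) (e j)" using a by (simp only: P_def)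
    also have "\<dots> = P i j" unfolding e_def by (rule bf_unit[OF that(2)])
    also have "\<dots> = e i j - (\<Sum>l<T. (c l * bf n (e i) (g l)) * g l j)" by (simp add: P_def pj_def)
    also have "(\<Sum>l<T. (c l * bf n (e i) (g l)) * g l j) = (\<Sum>l<T. c l * g l i * g l j)"
    proof (rule sum.cong)
      fix l show "(c l * bf n (e i) (g l)) * g l j = c l * g l i * g l j"
        using bf_unit[OF that(1), of "g l"] by (simp add: e_def bf_sym)
    qed simp
    finally show ?thesis .
  qed
  define gg where "gg = (\<lambda>l j. \<pi> (g l j))"
  have "\<forall>i<n. \<exists>cc. (\<lambda>j. if j = i then 1 else 0) = (\<lambda>j. \<Sum>l<T. cc l * gg l j)"
  proof (intro allI impI)
    fix i assume i: "i < n"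
    show "\<exists>cc. (\<lambda>j. if j = i then 1 else 0) = (\<lambda>j. \<Sum>l<T. cc l * gg l j)"
    proof (intro exI ext)
      fix j
      show "(if j = i then 1 else 0) = (\<Sum>l<T. (\<pi> (c l) * \<pi> (g l i)) * gg l j)"
      proof (cases "j < n")
        case True
        have "0 = \<pi> (e i j - (\<Sum>l<T. c l * g l i * g l j))" using key[OF i True] entry[OF i True] by simp
        also have "\<dots> = (if j = i then 1 else 0) - (\<Sum>l<T. (\<pi> (c l) * \<pi> (g l i)) * gg l j)"
          by (simp add: pi_diff pi_sum pi_mult e_def pi_one pi_zero gg_def)
        finally show ?thesis by simp
      next
        case False
        then have "g l j = 0" if "l < T" for l using gv that by (simp add: vecs_def)
        then show ?thesis using False i by (simp add: gg_def pi_zero)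
      qed
    qed
  qed
  then have "n \<le> T" by (rule steinitz)
  then show False using Tn by simp
qed

lemma extend_aux:
  "\<forall>g T. ofam \<pi> n g T \<longrightarrow> n = T + d \<longrightarrow> (\<exists>g'. ofam \<pi> n g' n \<and> (\<forall>l<T. g' l = g l))"
proof (induction d)
  case 0 then show ?case by auto
next
  case (Suc d)
  show ?case
  proof (intro allI impI)
    fix g T assume fam: "ofam \<pi> n g T" and nT: "n = T + Suc d"
    obtain h where h: "h \<in> vecs n" "\<pi> (bf n h h) \<noteq> 0" "\<forall>m<T. bf n h (g m) = 0"
      using extend1[OF fam] nT by auto
    have fam': "ofam \<pi> n (g(T := h)) (Suc T)" by (rule ofam_ext1[OF fam h])
    obtain g' where g': "ofam \<pi> n g' n" "\<forall>l<Suc T. g' l = (g(T := h)) l"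
      using Suc.IH fam' nT by fastforce
    show "\<exists>g'. ofam \<pi> n g' n \<and> (\<forall>l<T. g' l = g l)"
      using g' by (intro exI[of _ g']) auto
  qed
qed

lemma extend:
  assumes "ofam \<pi> n g T" "T \<le> n"
  shows "\<exists>g'. ofam \<pi> n g' n \<and> (\<forall>l<T. g' l = g l)"
  using extend_aux[of n "n - T"] assms by auto

lemma build:
  assumes val: "valuation_ring TYPE('a)" and fam: "ofam \<pi> n g0 T0" and vv: "\<forall>j<s. v j \<in> vecs n"
  shows "\<exists>T g. T0 \<le> T \<and> T \<le> T0 + 2 * s \<and> (formally_real TYPE('k) \<longrightarrow> T \<le> T0 + s)
     \<and> ofam \<pi> n g T \<and> (\<forall>l<T0. g l = g0 l)
     \<and> (\<forall>x. (\<forall>l<T. bf n x (g l) = 0) \<longrightarrow> (\<forall>j<s. bf n x (v j) = 0))"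
  using vv
proof (induction s)
  case 0 then show ?case using fam by (intro exI[of _ T0] exI[of _ g0]) auto
next
  case (Suc s)
  obtain T g where IH: "T0 \<le> T" "T \<le> T0 + 2 * s" "formally_real TYPE('k) \<longrightarrow> T \<le> T0 + s"
     "ofam \<pi> n g T" "\<forall>l<T0. g l = g0 l"
     "\<forall>x. (\<forall>l<T. bf n x (g l) = 0) \<longrightarrow> (\<forall>j<s. bf n x (v j) = 0)"
    using Suc by auto
  obtain T' g' where C: "T \<le> T'" "T' \<le> T + 2" "formally_real TYPE('k) \<longrightarrow> T' \<le> T + 1"
     "ofam \<pi> n g' T'" "\<forall>l<T. g' l = g l" "\<forall>x. (\<forall>l<T'. bf n x (g' l) = 0) \<longrightarrow> bf n x (v s) = 0"
    using core[OF val IH(4), of "v s"] Suc.prems by auto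
  have "\<forall>x. (\<forall>l<T'. bf n x (g' l) = 0) \<longrightarrow> (\<forall>j<Suc s. bf n x (v j) = 0)"
  proof (intro allI impI)
    fix x j assume x: "\<forall>l<T'. bf n x (g' l) = 0" and j: "j < Suc s"
    have "\<forall>l<T. bf n x (g l) = 0" using x C(1,5) by (metis order_less_le_trans)
    then have "\<forall>j<s. bf n x (v j) = 0" using IH(6) by blast
    then show "bf n x (v j) = 0" using C(6) x j less_Suc_eq by auto
  qed
  then show ?case using IH C by (intro exI[of _ T'] exI[of _ g']) auto
qed

end


definition Wset :: "nat \<Rightarrow> (nat \<Rightarrow> nat \<Rightarrow> 'a::comm_ring_1) \<Rightarrow> nat \<Rightarrow> (nat \<Rightarrow> 'a) set" where
  "Wset n g T = {x \<in> vecs n. \<forall>l<T. bf n x (g l) = 0}"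

lemma Wsum_in:
  fixes N :: nat
  assumes "\<forall>i<N. v i \<in> Wset n g T"
  shows "(\<lambda>j. \<Sum>i<N. a i * v i j) \<in> Wset n g T"
  using assms unfolding Wset_def vecs_def by (auto simp: bf_sum)

lemma W_submod: "submod n (Wset n g T)"
  unfolding submod_def Wset_def vecs_def
  by (auto simp: bf_add bf_scale bf_zero_l)

lemma sum_orth:
  fixes T m :: nat
  assumes orth: "\<forall>l<T. \<forall>m<T. l \<noteq> m \<longrightarrow> bf n (g l) (g m) = 0" and m: "m < T"
  shows "(\<Sum>l<T. a l * bf n (g l) (g m)) = a m * bf n (g m) (g m)"
proof -
  have "(\<Sum>l<T. a l * bf n (g l) (g m)) = (\<Sum>l<T. if l = m then a m * bf n (g m) (g m) else 0)"
    by (rule sum.cong) (use orth m in auto)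
  also have "\<dots> = a m * bf n (g m) (g m)" using m by simp
  finally show ?thesis .
qed

context resm begin

lemma W_quad:
  assumes fam: "ofam \<pi> n g T"
  shows "quad_submod n (Wset n g T)"
proof -
  obtain c where inv: "\<forall>l<T. c l * bf n (g l) (g l) = 1" using inv_fam[OF fam] by blast
  have orth: "\<forall>l<T. \<forall>m<T. l \<noteq> m \<longrightarrow> bf n (g l) (g m) = 0" and gv: "\<forall>l<T. g l \<in> vecs n"
    and gu: "\<forall>l<T. \<pi> (bf n (g l) (g l)) \<noteq> 0" using fam unfolding ofam_def by auto
  define W' where "W' = {x. \<exists>cc. x = (\<lambda>j. \<Sum>l<T. cc l * g l j)}"
  have s': "submod n W'"
    unfolding submod_def
  proof (intro conjI ballI allI)
    show "W' \<subseteq> vecs n" using gv by (auto simp: W'_def vecs_def)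
    show "(\<lambda>_. 0) \<in> W'" unfolding W'_def by (intro CollectI exI[of _ "\<lambda>_. 0"]) simp
    fix x y assume x: "x \<in> W'" and y: "y \<in> W'"
    then obtain cx cy where "x = (\<lambda>j. \<Sum>l<T. cx l * g l j)" "y = (\<lambda>j. \<Sum>l<T. cy l * g l j)"
      unfolding W'_def by blast
    then show "(\<lambda>i. x i + y i) \<in> W'" unfolding W'_def
      by (intro CollectI exI[of _ "\<lambda>l. cx l + cy l"]) (simp add: sum.distrib algebra_simps)
  next
    fix a x assume x: "x \<in> W'"
    then obtain cx where "x = (\<lambda>j. \<Sum>l<T. cx l * g l j)" unfolding W'_def by blast
    then show "(\<lambda>i. a * x i) \<in> W'" unfolding W'_def
      by (intro CollectI exI[of _ "\<lambda>l. a * cx l"]) (simp add: sum_distrib_left algebra_simps)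
  qed
  have int: "Wset n g T \<inter> W' = {\<lambda>_. 0}"
  proof
    show "{\<lambda>_. 0} \<subseteq> Wset n g T \<inter> W'"
      using W_submod[of n g T] s' unfolding submod_def by auto
    show "Wset n g T \<inter> W' \<subseteq> {\<lambda>_. 0}"
    proof
      fix x assume x: "x \<in> Wset n g T \<inter> W'"
      then obtain cc where xc: "x = (\<lambda>j. \<Sum>l<T. cc l * g l j)" unfolding W'_def by blast
      have "cc m = 0" if m: "m < T" for m
      proof -
        have "0 = bf n x (g m)" using x m unfolding Wset_def by auto
        also have "\<dots> = cc m * bf n (g m) (g m)" unfolding xc bf_sum by (rule sum_orth[OF orth m])
        finally have "cc m * bf n (g m) (g m) = 0" by simp
        moreover have "bf n (g m) (g m) \<noteq> 0" using gu m pi_zero by metis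
        ultimately show ?thesis by simp
      qed
      then have "x = (\<lambda>_. 0)" unfolding xc by (intro ext) simp
      then show "x \<in> {\<lambda>_. 0}" by simp
    qed
  qed
  have dec: "\<forall>x\<in>vecs n. \<exists>y\<in>Wset n g T. \<exists>z\<in>W'. x = (\<lambda>i. y i + z i)"
  proof
    fix x :: "nat \<Rightarrow> 'a" assume x: "x \<in> vecs n"
    define y where "y = pj n g c T x"
    define z where "z = (\<lambda>j. \<Sum>l<T. (c l * bf n x (g l)) * g l j)"
    have "y \<in> Wset n g T" unfolding Wset_def y_def
      using pj_vecs[OF gv x] pj_perp[OF orth inv] by auto
    moreover have "z \<in> W'" unfolding W'_def z_def
      by (intro CollectI exI[of _ "\<lambda>l. c l * bf n x (g l)"]) simp
    moreover have "x = (\<lambda>i. y i + z i)" by (simp add: y_def z_def pj_def)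
    ultimately show "\<exists>y\<in>Wset n g T. \<exists>z\<in>W'. x = (\<lambda>i. y i + z i)" by blast
  qed
  show ?thesis unfolding quad_submod_def using W_submod s' int dec by blast
qed

lemma W_nonsing:
  assumes fam: "ofam \<pi> n g T"
  shows "nonsingular n (Wset n g T)"
proof -
  obtain c where inv: "\<forall>l<T. c l * bf n (g l) (g l) = 1" using inv_fam[OF fam] by blast
  have orth: "\<forall>l<T. \<forall>m<T. l \<noteq> m \<longrightarrow> bf n (g l) (g m) = 0" and gv: "\<forall>l<T. g l \<in> vecs n"
    using fam unfolding ofam_def by auto
  define W where "W = Wset n g T"
  define e :: "nat \<Rightarrow> nat \<Rightarrow> 'a" where "e = (\<lambda>i j. if j = i then 1 else 0)"
  define P where "P = (\<lambda>i. pj n g c T (e i))"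
  have ev: "e i \<in> vecs n" if "i < n" for i using that by (simp add: e_def vecs_def)
  have PW: "P i \<in> W" if "i < n" for i
    unfolding W_def Wset_def P_def using pj_vecs[OF gv ev[OF that]] pj_perp[OF orth inv] by auto
  have Pbf: "bf n y (P i) = y i" if "y \<in> W" "i < n" for y i
  proof -
    have "bf n y (P i) = bf n y (e i)" unfolding P_def
      by (rule pj_self) (use that in \<open>auto simp: W_def Wset_def\<close>)
    also have "\<dots> = y i" unfolding e_def by (rule bf_unit[OF that(2)])
    finally show ?thesis .
  qed
  have rad: "\<forall>x\<in>W. (\<forall>y\<in>W. Bq n x y = 0) \<longrightarrow> x = (\<lambda>_. 0)"
  proof (intro ballI impI ext)
    fix x j assume x: "x \<in> W" and h: "\<forall>y\<in>W. Bq n x y = 0"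
    show "x j = 0"
    proof (cases "j < n")
      case True
      have "Bq n x (P j) = 0" using h PW[OF True] by blast
      then have "2 * bf n x (P j) = 0" by (simp only: Bq_bf)
      then show ?thesis using two_a Pbf[OF x True] by simp
    next
      case False then show ?thesis using x by (simp add: W_def Wset_def vecs_def)
    qed
  qed
  have repr: "y = (\<lambda>j. \<Sum>i<n. y i * P i j)" if y: "y \<in> W" for y
  proof
    fix j
    have yv: "y \<in> vecs n" and yp: "\<forall>l<T. bf n y (g l) = 0" using y by (auto simp: W_def Wset_def)
    have "(\<Sum>i<n. y i * P i j) = (\<Sum>i<n. y i * e i j - (\<Sum>l<T. (c l * g l j) * (y i * g l i)))"
    proof (rule sum.cong)
      fix i assume i: "i \<in> {..<n}"
      have "bf n (e i) (g l) = g l i" for l using bf_unit[of i n "g l"] i by (simp add: e_def bf_sym)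
      then show "y i * P i j = y i * e i j - (\<Sum>l<T. (c l * g l j) * (y i * g l i))"
        by (simp add: P_def pj_def right_diff_distrib sum_distrib_left algebra_simps)
    qed simp
    also have "\<dots> = (\<Sum>i<n. y i * e i j) - (\<Sum>l<T. (c l * g l j) * bf n y (g l))"
      by (simp add: sum_subtractf bf_def sum_distrib_left sum.swap[of _ "{..<n}"])
    also have "(\<Sum>i<n. y i * e i j) = y j"
      using yv by (cases "j < n") (auto simp: e_def vecs_def if_distrib cong: if_cong)
    finally show "y j = (\<Sum>i<n. y i * P i j)" using yp by simp
  qed
  have lin: "\<phi> (\<lambda>j. \<Sum>i<N. a i * P i j) = (\<Sum>i<N. a i * \<phi> (P i))"
    if lf: "linear_functional W \<phi>" and N: "N \<le> n" for \<phi> a N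
    using N
  proof (induction N)
    case 0
    have z: "(\<lambda>_. 0) \<in> W" using W_submod[of n g T] unfolding W_def submod_def by blast
    have hom: "\<forall>a. \<forall>x\<in>W. \<phi> (\<lambda>i. a * x i) = a * \<phi> x"
      using lf unfolding linear_functional_def by blast
    have "\<phi> (\<lambda>i. 0 * (\<lambda>_. 0) i) = 0 * \<phi> (\<lambda>_. 0)"
      using hom[rule_format, of "\<lambda>_. 0" 0, OF z] .
    then show ?case by simp
  next
    case (Suc N)
    have S: "(\<lambda>j. \<Sum>i<N. a i * P i j) \<in> W" unfolding W_def
      by (rule Wsum_in) (use PW Suc.prems in \<open>auto simp: W_def\<close>)
    have PN: "P N \<in> W" using PW Suc.prems by simp
    have aP: "(\<lambda>j. a N * P N j) \<in> W"
      using PN W_submod[of n g T] unfolding W_def submod_def by blast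
    have "\<phi> (\<lambda>j. \<Sum>i<Suc N. a i * P i j)
        = \<phi> (\<lambda>j. (\<lambda>j. \<Sum>i<N. a i * P i j) j + (\<lambda>j. a N * P N j) j)" by simp
    also have "\<dots> = \<phi> (\<lambda>j. \<Sum>i<N. a i * P i j) + \<phi> (\<lambda>j. a N * P N j)"
    proof -
      have add: "\<forall>x\<in>W. \<forall>y\<in>W. \<phi> (\<lambda>i. x i + y i) = \<phi> x + \<phi> y"
        using lf unfolding linear_functional_def by blast
      show ?thesis using add[rule_format, OF S aP] by simp
    qed
    also have "\<phi> (\<lambda>j. a N * P N j) = a N * \<phi> (P N)"
    proof -
      have hom: "\<forall>a. \<forall>x\<in>W. \<phi> (\<lambda>i. a * x i) = a * \<phi> x"
        using lf unfolding linear_functional_def by blast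
      show ?thesis using hom[rule_format, of "P N" "a N", OF PN] by simp
    qed
    finally show ?case using Suc by simp
  qed
  have funrep: "\<exists>x\<in>W. \<forall>y\<in>W. \<phi> y = Bq n x y" if lf: "linear_functional W \<phi>" for \<phi>
  proof -
    obtain h :: 'a where h: "h * 2 = 1" using two by (metis dvd_def mult.commute)
    define z where "z = (\<lambda>i. if i < n then \<phi> (P i) else 0)"
    define x where "x = (\<lambda>j. h * pj n g c T z j)"
    have zv: "z \<in> vecs n" by (simp add: z_def vecs_def)
    have pzW: "pj n g c T z \<in> W" unfolding W_def Wset_def
      using pj_vecs[OF gv zv] pj_perp[OF orth inv] by auto
    have xW: "x \<in> W" unfolding x_def using pzW W_submod[of n g T] unfolding W_def submod_def by blast
    have "\<phi> y = Bq n x y" if y: "y \<in> W" for y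
    proof -
      have yp: "\<forall>l<T. bf n y (g l) = 0" using y by (auto simp: W_def Wset_def)
      have "Bq n x y = 2 * h * bf n (pj n g c T z) y" unfolding Bq_bf x_def bf_scale by simp
      also have "\<dots> = bf n y (pj n g c T z)" using h by (simp add: bf_sym mult.commute)
      also have "\<dots> = bf n y z" by (rule pj_self[OF yp])
      also have "\<dots> = (\<Sum>i<n. y i * \<phi> (P i))" unfolding bf_def z_def by simp
      also have "\<dots> = \<phi> (\<lambda>j. \<Sum>i<n. y i * P i j)" using lin[OF lf, of n y] by simp
      also have "\<dots> = \<phi> y" using repr[OF y] by simp
      finally show ?thesis by simp
    qed
    then show ?thesis using xW by blast
  qed
  show ?thesis unfolding nonsingular_def W_def[symmetric] using rad funrep by blast
qed

lemma W_dim: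
  assumes ext: "ofam \<pi> n g' n" and agree: "\<forall>l<T. g' l = g l" and dT: "T + d \<le> n"
  shows "dim_res_ge \<pi> (Wset n g T) d"
  unfolding dim_res_ge_def
proof (intro exI[of _ "\<lambda>j. g' (T + j)"] conjI allI impI)
  have orth: "\<forall>l<n. \<forall>m<n. l \<noteq> m \<longrightarrow> bf n (g' l) (g' m) = 0" and gv: "\<forall>l<n. g' l \<in> vecs n"
    and gu: "\<forall>l<n. \<pi> (bf n (g' l) (g' l)) \<noteq> 0" using ext unfolding ofam_def by auto
  fix j assume j: "j < d"
  show "g' (T + j) \<in> Wset n g T"
    unfolding Wset_def
  proof (intro CollectI conjI allI impI)
    show "g' (T + j) \<in> vecs n" using gv j dT by auto
    fix l assume l: "l < T"
    then have gl: "g l = g' l" using agree by simp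
    show "bf n (g' (T + j)) (g l) = 0" unfolding gl using orth l j dT by auto
  qed
next
  have orth: "\<forall>l<n. \<forall>m<n. l \<noteq> m \<longrightarrow> bf n (g' l) (g' m) = 0"
    and gu: "\<forall>l<n. \<pi> (bf n (g' l) (g' l)) \<noteq> 0" using ext unfolding ofam_def by auto
  fix cc j assume mem: "(\<lambda>i. \<Sum>j<d. cc j * g' (T + j) i) \<in> mW \<pi> (Wset n g T)" and j: "j < d"
  define x where "x = (\<lambda>i. \<Sum>j<d. cc j * g' (T + j) i)"
  have "\<exists>(l::nat) a y. (\<forall>j<l. \<pi> (a j) = 0 \<and> y j \<in> Wset n g T) \<and> x = (\<lambda>i. \<Sum>j<l. a j * y j i)"
    using mem unfolding mW_def x_def by (simp only: mem_Collect_eq)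
  then obtain l :: nat and a y where ay: "\<forall>j<l. \<pi> (a j) = 0 \<and> y j \<in> Wset n g T"
    and xe: "x = (\<lambda>i. \<Sum>j<l. a j * y j i)" by blast
  have pix: "\<pi> (x i) = 0" for i unfolding xe using ay by (simp add: pi_sum pi_mult)
  have "\<pi> (bf n x (g' (T + j))) = 0" unfolding pi_bf pix by (simp add: bf_def)
  moreover have "bf n x (g' (T + j)) = cc j * bf n (g' (T + j)) (g' (T + j))"
  proof -
    have "bf n x (g' (T + j)) = (\<Sum>i<d. cc i * bf n (g' (T + i)) (g' (T + j)))"
      unfolding x_def by (rule bf_sum)
    also have "\<dots> = (\<Sum>i<d. if i = j then cc j * bf n (g' (T + j)) (g' (T + j)) else 0)"
      by (rule sum.cong) (use orth j dT in auto)
    also have "\<dots> = cc j * bf n (g' (T + j)) (g' (T + j))" using j by simp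
    finally show ?thesis .
  qed
  ultimately have "\<pi> (cc j) * \<pi> (bf n (g' (T + j)) (g' (T + j))) = 0" by (simp add: pi_mult)
  then show "\<pi> (cc j) = 0" using gu j dT by simp
qed

lemma hensel_sqrt:
  assumes hen: "henselian \<pi>" and a: "\<pi> a = 1"
  shows "\<exists>t. t * t * a = 1"
proof -
  define f where "f = [:-1, 0, a:]"
  have mf: "map_poly \<pi> f = [:-1, 0, 1:]"
    unfolding f_def by (simp add: map_poly_pCons pi_zero pi_neg pi_one a)
  have "poly (map_poly \<pi> f) 1 = 0" unfolding mf by simp
  moreover have "poly (pderiv (map_poly \<pi> f)) 1 \<noteq> 0" unfolding mf using two_k by (simp add: pderiv_pCons)
  ultimately obtain t where "poly f t = 0" using hen unfolding henselian_def by blast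
  then have "-1 + t * (t * a) = 0" by (simp add: f_def)
  then have "t * (t * a) = 1" using add_eq_0_iff[of "-1" "t * (t * a)"] by simp
  then show ?thesis by (intro exI[of _ t]) (simp add: mult.assoc)
qed

end


lemma finish:
  fixes x :: "nat \<Rightarrow> 'a::idom"
  assumes xv: "x \<in> vecs n" and q: "qf n x = 1"
    and pu: "\<forall>i<r. bf n x (u i) = 0" and pv: "\<forall>j<s. bf n x (v j) = 0"
  shows "unit_vector n x \<and> x \<in> perp n (span_frame u r) \<inter> perp n (span_frame v s)"
proof -
  have "x \<in> perp n (span_frame w t)" if pw: "\<forall>i<t. bf n x (w i) = 0" for w t
    unfolding perp_def span_frame_def
  proof (intro CollectI conjI xv ballI)
    fix y assume "y \<in> {x. \<exists>c. x = (\<lambda>k. \<Sum>i<t. c i * w i k)}"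
    then obtain c where y: "y = (\<lambda>k. \<Sum>i<t. c i * w i k)" by blast
    show "Bq n x y = 0" unfolding y Bq_bf bf_sum_r using pw by simp
  qed
  then show ?thesis using pu pv xv q unfolding unit_vector_def by blast
qed

context resm begin

lemma frame_ofam:
  assumes "frame n u r"
  shows "ofam \<pi> n u r"
proof -
  have "\<forall>i<r. u i \<in> vecs n \<and> bf n (u i) (u i) = 1"
    using assms unfolding frame_def unit_vector_def qf_bf by blast
  moreover have "\<forall>i<r. \<forall>j<r. i \<noteq> j \<longrightarrow> bf n (u i) (u j) = 0"
  proof (intro allI impI)
    fix i j assume "i < r" "j < r" "i \<noteq> j"
    then have "Bq n (u i) (u j) = 0" using assms unfolding frame_def by blast
    then have "2 * bf n (u i) (u j) = 0" by (simp only: Bq_bf)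
    then show "bf n (u i) (u j) = 0" using two_a by simp
  qed
  ultimately show ?thesis unfolding ofam_def using pi_one by simp
qed

lemma caseAB:
  fixes u v :: "nat \<Rightarrow> nat \<Rightarrow> 'a"
  assumes val: "valuation_ring TYPE('a)" and uo: "ofam \<pi> n u r" and vv: "\<forall>j<s. v j \<in> vecs n"
    and good: "mA_good \<pi> m"
    and cond: "r + 2 * s + m \<le> n \<or> (formally_real TYPE('k) \<and> r + s + m \<le> n)"
  shows "\<exists>x. x \<in> vecs n \<and> qf n x = 1 \<and> (\<forall>i<r. bf n x (u i) = 0) \<and> (\<forall>j<s. bf n x (v j) = 0)"
proof -
  obtain T g where b: "r \<le> T" "T \<le> r + 2 * s" "formally_real TYPE('k) \<longrightarrow> T \<le> r + s"
     "ofam \<pi> n g T" "\<forall>l<r. g l = u l"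
     "\<forall>x. (\<forall>l<T. bf n x (g l) = 0) \<longrightarrow> (\<forall>j<s. bf n x (v j) = 0)"
    using build[OF val uo vv] by blast
  have Tm: "T + m \<le> n" using cond b(2,3) by auto
  obtain g' where g': "ofam \<pi> n g' n" "\<forall>l<T. g' l = g l" using extend[OF b(4)] Tm by auto
  have "quad_submod n (Wset n g T) \<and> nonsingular n (Wset n g T) \<and> dim_res_ge \<pi> (Wset n g T) m"
    using W_quad[OF b(4)] W_nonsing[OF b(4)] W_dim[OF g' Tm] by blast
  then obtain x where x: "x \<in> Wset n g T" "qf n x = 1"
    using good unfolding mA_good_def by blast
  have xv: "x \<in> vecs n" and xp: "\<forall>l<T. bf n x (g l) = 0" using x unfolding Wset_def by auto
  have "\<forall>i<r. bf n x (u i) = 0" using xp b(1,5) by (metis order_less_le_trans)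
  moreover have "\<forall>j<s. bf n x (v j) = 0" using xp b(6) by blast
  ultimately show ?thesis using xv x(2) by blast
qed

lemma caseCD:
  fixes u v :: "nat \<Rightarrow> nat \<Rightarrow> 'a"
  assumes val: "valuation_ring TYPE('a)" and hen: "henselian \<pi>"
    and vfr: "frame n v s" and uv: "\<forall>i<r. u i \<in> vecs n"
    and hP: "\<exists>p. (0 < r \<longrightarrow> pyth_good TYPE('k) p) \<and> (2 * p * r + s < n \<or> (formally_real TYPE('k) \<and> p * r + s < n))"
  shows "\<exists>x. x \<in> vecs n \<and> qf n x = 1 \<and> (\<forall>i<r. bf n x (u i) = 0) \<and> (\<forall>j<s. bf n x (v j) = 0)"
proof -
  obtain p where pg: "0 < r \<longrightarrow> pyth_good TYPE('k) p"
    and pc: "2 * p * r + s < n \<or> (formally_real TYPE('k) \<and> p * r + s < n)" using hP by blast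
  have vo: "ofam \<pi> n v s" by (rule frame_ofam[OF vfr])
  have vn: "\<forall>j<s. bf n (v j) (v j) = 1" and vv: "\<forall>j<s. v j \<in> vecs n"
    using vfr unfolding frame_def unit_vector_def qf_bf by auto
  obtain T g where b: "s \<le> T" "T \<le> s + 2 * r" "formally_real TYPE('k) \<longrightarrow> T \<le> s + r"
     "ofam \<pi> n g T" "\<forall>l<s. g l = v l"
     "\<forall>x. (\<forall>l<T. bf n x (g l) = 0) \<longrightarrow> (\<forall>j<r. bf n x (u j) = 0)"
    using build[OF val vo uv] by blast
  have orth: "\<forall>l<T. \<forall>m<T. l \<noteq> m \<longrightarrow> bf n (g l) (g m) = 0" and gv: "\<forall>l<T. g l \<in> vecs n"
    and gu: "\<forall>l<T. \<pi> (bf n (g l) (g l)) \<noteq> 0" using b(4) unfolding ofam_def by auto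
  define c where "c = T - s"
  have Tc: "T = s + c" using b(1) by (simp add: c_def)
  have cp: "c * p + s < n"
  proof (cases "2 * p * r + s < n")
    case True
    have "c \<le> 2 * r" using b(2) Tc by simp
    then have "c * p \<le> 2 * r * p" by (rule mult_le_mono1)
    moreover have "2 * r * p = 2 * p * r" by (simp add: algebra_simps)
    ultimately show ?thesis using True by linarith
  next
    case False
    then have fr: "formally_real TYPE('k)" and pr: "p * r + s < n" using pc by auto
    have "c \<le> r" using b(3) fr Tc by simp
    then have "c * p \<le> r * p" by (rule mult_le_mono1)
    moreover have "r * p = p * r" by (simp add: algebra_simps)
    ultimately show ?thesis using pr by linarith
  qed
  define f where "f = (\<lambda>j l. \<pi> (v j l))"
  define h where "h = (\<lambda>i l. \<pi> (g (s + i) l))"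
  have pbf: "\<pi> (bf n x y) = bf n (\<lambda>l. \<pi> (x l)) (\<lambda>l. \<pi> (y l))" for x y by (rule pi_bf)
  have hsq: "\<forall>i<c. \<exists>t. bf n (h i) (h i) = (\<Sum>l<p. (t l)^2)"
  proof (intro allI impI)
    fix i assume i: "i < c"
    then have r0: "0 < r" using b(2) Tc by simp
    have "sum_of_squares (bf n (h i) (h i))"
      unfolding sum_of_squares_def sum_of_p_squares_def bf_def
      by (intro exI[of _ n] exI[of _ "h i"]) (simp add: power2_eq_square)
    then have "sum_of_p_squares (bf n (h i) (h i)) p" using pg r0 unfolding pyth_good_def by blast
    then show "\<exists>t. bf n (h i) (h i) = (\<Sum>l<p. (t l)^2)" unfolding sum_of_p_squares_def by blast
  qed
  have "\<forall>i. \<exists>t. i < c \<longrightarrow> bf n (h i) (h i) = (\<Sum>l<p. (t l)^2)" using hsq by blast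
  from choice[OF this] obtain tt where tt: "\<forall>i<c. bf n (h i) (h i) = (\<Sum>l<p. (tt i l)^2)" by blast
  have "\<exists>x. (\<forall>l\<ge>n. x l = 0) \<and> bf n x x = 1 \<and> (\<forall>j<s. bf n x (f j) = 0) \<and> (\<forall>i<c. bf n x (h i) = 0)"
  proof (rule KL[OF two_k])
    show "\<forall>j<s. \<forall>l\<ge>n. f j l = 0" using vv by (simp add: f_def vecs_def pi_zero)
    show "\<forall>i<c. \<forall>l\<ge>n. h i l = 0" using gv Tc by (simp add: h_def vecs_def pi_zero)
    show "\<forall>i<s. \<forall>j<s. i \<noteq> j \<longrightarrow> bf n (f i) (f j) = 0"
      using vo unfolding ofam_def f_def by (auto simp: pbf[symmetric] pi_zero)
    show "\<forall>i<s. bf n (f i) (f i) = 1" using vn unfolding f_def by (auto simp: pbf[symmetric] pi_one)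
    show "\<forall>i<c. \<forall>j<c. i \<noteq> j \<longrightarrow> bf n (h i) (h j) = 0"
      using orth Tc unfolding h_def by (auto simp: pbf[symmetric] pi_zero)
    show "\<forall>i<c. bf n (h i) (h i) \<noteq> 0" using gu Tc unfolding h_def by (auto simp: pbf[symmetric])
    show "\<forall>i<c. \<forall>j<s. bf n (h i) (f j) = 0"
    proof (intro allI impI)
      fix i j assume i: "i < c" and j: "j < s"
      have "bf n (g (s + i)) (g j) = 0" using orth i j Tc by auto
      then show "bf n (h i) (f j) = 0" unfolding h_def f_def using b(5) j by (simp add: pbf[symmetric] pi_zero)
    qed
    show "\<forall>i<c. bf n (h i) (h i) = (\<Sum>l<p. (tt i l)^2)" by (rule tt)
    show "c * p + s < n" by (rule cp)
  qed
  then obtain xb where xb0: "\<forall>l\<ge>n. xb l = 0" and xb1: "bf n xb xb = 1"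
    and xbf: "\<forall>j<s. bf n xb (f j) = 0" and xbh: "\<forall>i<c. bf n xb (h i) = 0" by blast
  have "\<forall>y. \<exists>a. \<pi> a = y" using pi_surj by (metis surjD)
  from choice[OF this] obtain \<iota> where \<iota>: "\<forall>y. \<pi> (\<iota> y) = y" by blast
  define xa where "xa = (\<lambda>l. if l < n then \<iota> (xb l) else 0)"
  have xav: "xa \<in> vecs n" by (simp add: xa_def vecs_def)
  have pxa: "(\<lambda>l. \<pi> (xa l)) = xb" using \<iota> xb0 pi_zero by (auto simp: xa_def fun_eq_iff)
  obtain ci where inv: "\<forall>l<T. ci l * bf n (g l) (g l) = 1" using inv_fam[OF b(4)] by blast
  define y where "y = pj n g ci T xa"
  have yv: "y \<in> vecs n" unfolding y_def by (rule pj_vecs[OF gv xav])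
  have yp: "\<forall>m<T. bf n y (g m) = 0" unfolding y_def using pj_perp[OF orth inv] by blast
  have xag: "\<pi> (bf n xa (g m)) = 0" if m: "m < T" for m
  proof (cases "m < s")
    case True
    have "\<pi> (bf n xa (g m)) = bf n xb (f m)" unfolding pbf pxa f_def using b(5) True by simp
    then show ?thesis using xbf True by simp
  next
    case False
    then obtain i where i: "m = s + i" "i < c" using m Tc by (metis add_less_imp_less_left le_Suc_ex not_less)
    have "\<pi> (bf n xa (g m)) = bf n xb (h i)" unfolding pbf pxa h_def using i by simp
    then show ?thesis using xbh i by simp
  qed
  have py: "(\<lambda>l. \<pi> (y l)) = xb"
  proof
    fix l
    have "\<pi> (y l) = \<pi> (xa l) - (\<Sum>m<T. \<pi> (ci m) * \<pi> (bf n xa (g m)) * \<pi> (g m l))"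
      by (simp add: y_def pj_def pi_diff pi_sum pi_mult)
    also have "(\<Sum>m<T. \<pi> (ci m) * \<pi> (bf n xa (g m)) * \<pi> (g m l)) = 0"
      using xag by simp
    finally show "\<pi> (y l) = xb l" using pxa by (metis diff_zero)
  qed
  have "\<pi> (bf n y y) = 1" unfolding pbf py by (rule xb1)
  then obtain t where t: "t * t * bf n y y = 1" using hensel_sqrt[OF hen] by blast
  define x where "x = (\<lambda>l. t * y l)"
  have "x \<in> vecs n" using yv by (simp add: x_def vecs_def)
  moreover have "qf n x = 1" unfolding qf_bf x_def bf_scale bf_scale_r using t by (simp add: mult.assoc)
  moreover have xp: "\<forall>m<T. bf n x (g m) = 0" unfolding x_def bf_scale using yp by simp
  moreover have "\<forall>j<s. bf n x (v j) = 0" using xp b(1,5) by (metis order_less_le_trans)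
  moreover have "\<forall>j<r. bf n x (u j) = 0" using xp b(6) by blast
  ultimately show ?thesis by blast
qed

end


theorem proposition2p10:
  fixes \<pi> :: "'a::idom \<Rightarrow> 'k::field"
    and n r s :: nat
    and u v :: "nat \<Rightarrow> nat \<Rightarrow> 'a"
  assumes "valuation_ring TYPE('a)"
    and "residue_map \<pi>"
    and "(2::'a) dvd 1"
    and "frame n u r"
    and "frame n v s"
    and "(enat n \<ge> m_A \<pi> + enat r + 2 * enat s)
         \<or> (enat n \<ge> m_A \<pi> + enat r + enat s \<and> formally_real TYPE('k))
         \<or> (enat n > 2 * pythagoras_number TYPE('k) * enat r + enat s \<and> henselian \<pi>)
         \<or> (enat n > pythagoras_number TYPE('k) * enat r + enat s \<and> henselian \<pi>
              \<and> formally_real TYPE('k))"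
  shows "\<exists>x. unit_vector n x \<and> x \<in> perp n (span_frame u r) \<inter> perp n (span_frame v s)"
proof -
  interpret resm \<pi> using assms(2,3) by unfold_locales
  have val: "valuation_ring TYPE('a)" by (rule assms(1))
  have uo: "ofam \<pi> n u r" by (rule frame_ofam[OF assms(4)])
  have uv: "\<forall>i<r. u i \<in> vecs n" and vv: "\<forall>j<s. v j \<in> vecs n"
    using assms(4,5) unfolding frame_def unit_vector_def by auto
  have main: "\<exists>x. x \<in> vecs n \<and> qf n x = 1 \<and> (\<forall>i<r. bf n x (u i) = 0) \<and> (\<forall>j<s. bf n x (v j) = 0)"
  proof -
    consider (A) "enat n \<ge> m_A \<pi> + enat r + 2 * enat s"
      | (B) "enat n \<ge> m_A \<pi> + enat r + enat s" "formally_real TYPE('k)"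
      | (C) "enat n > 2 * pythagoras_number TYPE('k) * enat r + enat s" "henselian \<pi>"
      | (D) "enat n > pythagoras_number TYPE('k) * enat r + enat s" "henselian \<pi>" "formally_real TYPE('k)"
      using assms(6) by blast
    then show ?thesis
    proof cases
      case A
      have ex: "\<exists>m\<ge>1. mA_good \<pi> m"
      proof (rule ccontr)
        assume "\<not> ?thesis"
        then have "m_A \<pi> = \<infinity>" unfolding m_A_def by simp
        then show False using A by simp
      qed
      define M where "M = (LEAST m. m \<ge> 1 \<and> mA_good \<pi> m)"
      have good: "mA_good \<pi> M" unfolding M_def using LeastI_ex[OF ex[unfolded Bex_def]] by blast
      have "m_A \<pi> = enat M" unfolding m_A_def M_def using ex by simp
      then have "enat (M + r + 2 * s) \<le> enat n" using A by (simp add: numeral_eq_enat)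
      then have "r + 2 * s + M \<le> n" by simp
      then show ?thesis using caseAB[OF val uo vv good] by blast
    next
      case B
      have ex: "\<exists>m\<ge>1. mA_good \<pi> m"
      proof (rule ccontr)
        assume "\<not> ?thesis"
        then have "m_A \<pi> = \<infinity>" unfolding m_A_def by simp
        then show False using B by simp
      qed
      define M where "M = (LEAST m. m \<ge> 1 \<and> mA_good \<pi> m)"
      have good: "mA_good \<pi> M" unfolding M_def using LeastI_ex[OF ex[unfolded Bex_def]] by blast
      have "m_A \<pi> = enat M" unfolding m_A_def M_def using ex by simp
      then have "enat (M + r + s) \<le> enat n" using B by simp
      then have "r + s + M \<le> n" by simp
      then show ?thesis using caseAB[OF val uo vv good] B(2) by blast
    next
      case C
      show ?thesis
      proof (cases "\<exists>p\<ge>1. pyth_good TYPE('k) p")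
        case True
        define p where "p = (LEAST p. p \<ge> 1 \<and> pyth_good TYPE('k) p)"
        have pg: "pyth_good TYPE('k) p" unfolding p_def using LeastI_ex[OF True[unfolded Bex_def]] by blast
        have "pythagoras_number TYPE('k) = enat p" unfolding pythagoras_number_def p_def using True by simp
        then have "enat (2 * p * r + s) < enat n" using C(1) by (simp add: numeral_eq_enat)
        then have "2 * p * r + s < n" by simp
        then show ?thesis using caseCD[OF val C(2) assms(5) uv] pg by blast
      next
        case False
        then have P: "pythagoras_number TYPE('k) = \<infinity>" unfolding pythagoras_number_def by simp
        have r0: "r = 0"
        proof (rule ccontr)
          assume "r \<noteq> 0"
          then have "2 * pythagoras_number TYPE('k) * enat r = \<infinity>" using P
            by (simp add: numeral_eq_enat imult_is_infinity zero_enat_def)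
          then show False using C(1) by simp
        qed
        have "s < n" using C(1) P r0 by (simp add: zero_enat_def[symmetric])
        then have "\<exists>p. (0 < r \<longrightarrow> pyth_good TYPE('k) p) \<and> (2 * p * r + s < n \<or> (formally_real TYPE('k) \<and> p * r + s < n))"
          using r0 by (intro exI[of _ 0]) simp
        then show ?thesis using caseCD[OF val C(2) assms(5) uv] by blast
      qed
    next
      case D
      show ?thesis
      proof (cases "\<exists>p\<ge>1. pyth_good TYPE('k) p")
        case True
        define p where "p = (LEAST p. p \<ge> 1 \<and> pyth_good TYPE('k) p)"
        have pg: "pyth_good TYPE('k) p" unfolding p_def using LeastI_ex[OF True[unfolded Bex_def]] by blast
        have "pythagoras_number TYPE('k) = enat p" unfolding pythagoras_number_def p_def using True by simp
        then have "enat (p * r + s) < enat n" using D(1) by simp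
        then have "p * r + s < n" by simp
        then show ?thesis using caseCD[OF val D(2) assms(5) uv] pg D(3) by blast
      next
        case False
        then have P: "pythagoras_number TYPE('k) = \<infinity>" unfolding pythagoras_number_def by simp
        have r0: "r = 0"
        proof (rule ccontr)
          assume "r \<noteq> 0"
          then have "pythagoras_number TYPE('k) * enat r = \<infinity>" using P
            by (simp add: imult_is_infinity zero_enat_def)
          then show False using D(1) by simp
        qed
        have "s < n" using D(1) P r0 by (simp add: zero_enat_def[symmetric])
        then have "\<exists>p. (0 < r \<longrightarrow> pyth_good TYPE('k) p) \<and> (2 * p * r + s < n \<or> (formally_real TYPE('k) \<and> p * r + s < n))"
          using r0 by (intro exI[of _ 0]) simp
        then show ?thesis using caseCD[OF val D(2) assms(5) uv] by blast
      qed
    qed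
  qed
  then obtain x where "x \<in> vecs n" "qf n x = 1" "\<forall>i<r. bf n x (u i) = 0" "\<forall>j<s. bf n x (v j) = 0"
    by blast
  then show ?thesis using finish by blast
qed

end
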